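(* In the setting below, for every $S\subseteq\{1,\dots,n\}$ and every $t>0$, $$\mathbb{P}\Big(\max_{i\in S^c}\|A_S^*Ae_i\|_2\ge\sqrt{\Theta/m}+t\Big)\le n\exp\!\left(-\frac{mt^2/2}{\Theta\,(1+4\sqrt{\Theta/m}+2t/3)}\right),$$ where $\Theta=\Theta(S,F)$, provided $\Theta(S,F)\ge\Lambda(S,F)$ for some admissible $\Lambda(S,F)$.
   Context: Setting: Let $n,m\ge 1$. For $\ell=1,\dots,m$ let $F_\ell$ be a probability distribution on $\mathbb{C}^{p_\ell\times n}$, $F=(F_\ell)$, $B_1,\dots,B_m$ independent with $B_\ell\sim F_\ell$, $A=\frac{1}{\sqrt m}(B_1;\dots;B_m)$ (stacked vertically), and isotropy $\frac1m\sum_{\ell=1}^m\mathbb{E}(B_\ell^*B_\ell)=\mathrm{Id}_n$. $P_Sx=x_S$, $M_S:=MP_S^*$, $B_{\ell,S}=B_\ell P_S^*$; $e_i$ the canonical basis; $S^c$ the complement of $S$. $\|M\|_{\infty\to\infty}$ is the maximal $\ell^1$ norm of a row. $\Theta(S,F)$ is a positive real with $\|B_\ell^*B_{\ell,S}\|_{\infty\to\infty}\le\Theta(S,F)$ a.s. for all $\ell$; $\Lambda(S,F)$ is a positive real with $\|B_{\ell,S}^*B_{\ell,S}\|_{2\to2}\le\Lambda(S,F)$ a.s. for all $\ell$. *)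

theory Defs
  imports "HOL-Probability.Probability"
begin

text \<open>Matrices are represented as functions on index pairs (row, column), with
  rows and columns indexed from 0. A matrix B in C^(p x n) is a function
  nat \<times> nat \<Rightarrow> complex, with relevant entries for row < p, column < n.\<close>

text \<open>The measurable space of p x n complex matrices (entries outside the index
  set are undefined, as in PiM).\<close>
definition cmat_space :: "nat \<Rightarrow> nat \<Rightarrow> (nat \<times> nat \<Rightarrow> complex) measure" where
  "cmat_space p n = PiM ({..<p} \<times> {..<n}) (\<lambda>_. borel)"

definition gram :: "nat \<Rightarrow> (nat \<times> nat \<Rightarrow> complex) \<Rightarrow> nat \<Rightarrow> nat \<Rightarrow> complex" where
  "gram p B j j' = (\<Sum>k<p. cnj (B (k, j)) * B (k, j'))"

definition norm_inf_inf :: "nat set \<Rightarrow> nat set \<Rightarrow> (nat \<Rightarrow> nat \<Rightarrow> complex) \<Rightarrow> real" where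
  "norm_inf_inf I J G = Max (insert 0 ((\<lambda>i. \<Sum>j\<in>J. cmod (G i j)) ` I))"

definition norm_2_2 :: "nat set \<Rightarrow> nat set \<Rightarrow> (nat \<Rightarrow> nat \<Rightarrow> complex) \<Rightarrow> real" where
  "norm_2_2 I J G = Sup {sqrt (\<Sum>i\<in>I. (cmod (\<Sum>j\<in>J. G i j * x j))\<^sup>2) | x.
                          (\<Sum>j\<in>J. (cmod (x j))\<^sup>2) \<le> 1}"

text \<open>The stacked matrix A = (1/sqrt m) (B_1; ...; B_m); its rows are indexed by pairs
  (l, k) with l < m and k < p l (row k of block l).\<close>
definition stackA :: "nat \<Rightarrow> (nat \<Rightarrow> nat \<times> nat \<Rightarrow> complex) \<Rightarrow> (nat \<times> nat) \<Rightarrow> nat \<Rightarrow> complex" where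
  "stackA m Bs = (\<lambda>(l, k) j. Bs l (k, j) / complex_of_real (sqrt (real m)))"

definition stack_rows :: "nat \<Rightarrow> (nat \<Rightarrow> nat) \<Rightarrow> (nat \<times> nat) set" where
  "stack_rows m p = Sigma {..<m} (\<lambda>l. {..<p l})"

text \<open>The vector A_S^* A e_i, with entries indexed by s in S.\<close>
definition ASAe :: "nat \<Rightarrow> (nat \<Rightarrow> nat) \<Rightarrow> (nat \<Rightarrow> nat \<times> nat \<Rightarrow> complex) \<Rightarrow> nat \<Rightarrow> nat \<Rightarrow> complex" where
  "ASAe m p Bs i s = (\<Sum>r\<in>stack_rows m p. cnj (stackA m Bs r s) * stackA m Bs r i)"

definition vnorm2 :: "nat set \<Rightarrow> (nat \<Rightarrow> complex) \<Rightarrow> real" where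
  "vnorm2 S x = sqrt (\<Sum>s\<in>S. (cmod (x s))\<^sup>2)"

end

theory Submission
  imports Defs
begin


lemma incr_from_deriv:
  fixes f f' :: "real \<Rightarrow> real"
  assumes d: "\<And>x. 0 \<le> x \<Longrightarrow> (f has_real_derivative f' x) (at x)"
    and p: "\<And>x. 0 \<le> x \<Longrightarrow> f' x \<ge> 0" and y: "0 \<le> y"
  shows "f 0 \<le> f y"
proof (rule DERIV_nonneg_imp_increasing_open[OF y])
  show "\<And>x. 0 < x \<Longrightarrow> x < y \<Longrightarrow> \<exists>z. (f has_real_derivative z) (at x) \<and> 0 \<le> z"
    using d p by (meson less_imp_le)
  show "continuous_on {0..y} f"
    by (rule continuous_at_imp_continuous_on) (use d in \<open>meson DERIV_isCont atLeastAtMost_iff\<close>)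
qed

lemma sinh_ge_self: assumes "0 \<le> (x::real)" shows "x \<le> sinh x"
proof -
  have "(\<lambda>x. sinh x - x) 0 \<le> (\<lambda>x. sinh x - x) x"
    by (rule incr_from_deriv[where f'="\<lambda>x. cosh x - 1"])
       (auto intro!: derivative_eq_intros simp: cosh_real_ge_1 assms)
  then show ?thesis by simp
qed

lemma exp_bernstein_aux:
  assumes "0 \<le> (y::real)"
  shows "2 * (1 - y/3) * (exp y - 1 - y) \<le> y\<^sup>2"
proof -
  define j' where "j' = (\<lambda>y::real. 1 - exp y + y * exp y)"
  define j where "j = (\<lambda>y::real. y + 2 - 2 * exp y + y * exp y)"
  define k where "k = (\<lambda>y::real. y\<^sup>2 - 2 * (1 - y/3) * (exp y - 1 - y))"
  have j'p: "0 \<le> j' x" if "0 \<le> x" for x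
  proof -
    have "j' 0 \<le> j' x"
      by (rule incr_from_deriv[where f'="\<lambda>x. x * exp x"]) 
         (auto intro!: derivative_eq_intros simp: j'_def that algebra_simps)
    then show ?thesis by (simp add: j'_def)
  qed
  have jp: "0 \<le> j x" if "0 \<le> x" for x
  proof -
    have "j 0 \<le> j x"
    proof (rule incr_from_deriv[where f'=j'])
      fix x :: real assume "0 \<le> x"
      show "(j has_real_derivative j' x) (at x)" unfolding j_def j'_def
        by (rule derivative_eq_intros refl)+ (simp add: algebra_simps)
    qed (use j'p that in auto)
    then show ?thesis by (simp add: j_def)
  qed
  have "k 0 \<le> k y"
  proof (rule incr_from_deriv[where f'="\<lambda>x. 2/3 * j x"])
    fix x :: real assume "0 \<le> x"
    show "(k has_real_derivative 2/3 * j x) (at x)"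
      unfolding k_def j_def
      by (auto intro!: derivative_eq_intros simp: field_simps power2_eq_square)
  qed (use jp assms in auto)
  then show ?thesis by (simp add: k_def)
qed

lemma exp_bernstein:
  assumes "0 \<le> (y::real)" "y < 3"
  shows "exp y - 1 - y \<le> y\<^sup>2 / (2 * (1 - y/3))"
  using exp_bernstein_aux[OF assms(1)] assms(2)
  by (simp add: field_simps)

lemma ln_lower_aux:
  assumes "0 \<le> (u::real)"
  shows "2*u/(2+u) \<le> ln (1+u)"
proof -
  have "(\<lambda>u. ln (1+u) - 2*u/(2+u)) 0 \<le> (\<lambda>u. ln (1+u) - 2*u/(2+u)) u"
  proof (rule incr_from_deriv[where f'="\<lambda>u. 1/(1+u) - 4/(2+u)^2"])
    fix x :: real assume x: "0 \<le> x"
    show "((\<lambda>u. ln (1+u) - 2*u/(2+u)) has_real_derivative 1/(1+x) - 4/(2+x)^2) (at x)"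
      using x by (auto intro!: derivative_eq_intros simp: field_simps power2_eq_square)
    have "4*(1+x) \<le> (2+x)^2" by (simp add: power2_eq_square algebra_simps)
    then show "0 \<le> 1/(1+x) - 4/(2+x)^2" using x by (simp add: field_simps)
  qed (use assms in auto)
  then show ?thesis by simp
qed

lemma ln_lower:
  assumes "0 \<le> (u::real)" "u \<le> 2"
  shows "u\<^sup>2/4 \<le> ln (1+u)"
proof -
  have "u\<^sup>2/4 \<le> 2*u/(2+u)"
  proof -
    have "u * (2+u) \<le> 8" using mult_mono[of u 2 "2+u" 4] assms by simp
    then have "u * (u * (2+u)) \<le> u * 8" using assms by (intro mult_left_mono) auto
    then show ?thesis using assms by (simp add: field_simps power2_eq_square algebra_simps)
  qed
  then show ?thesis using ln_lower_aux[OF assms(1)] by linarith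
qed




lemma pow_convex:
  fixes y1 y2 t :: real
  assumes "0 \<le> y1" "0 \<le> y2" "0 \<le> t" "t \<le> 1"
  shows "((1-t)*y1 + t*y2)^k \<le> (1-t)*y1^k + t*y2^k"
proof -
  have "convex_on {0..} (\<lambda>x::real. x^k)"
  proof (rule convex_on_realI[where f'="\<lambda>x. real k * x^(k-1)"])
    show "connected {0::real..}" by simp
    fix x assume "x \<in> {0::real..}"
    show "((\<lambda>x. x^k) has_real_derivative real k * x^(k-1)) (at x)"
      using DERIV_pow[of k x] by simp
  next
    fix x y :: real assume "x \<in> {0..}" "y \<in> {0..}" "x \<le> y"
    then show "real k * x^(k-1) \<le> real k * y^(k-1)"
      by (intro mult_left_mono power_mono) auto
  qed
  from convex_onD[OF this, of t y1 y2] assms show ?thesis by simp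
qed

lemma cosh_sqrt_sums:
  assumes "0 \<le> (y::real)"
  shows "(\<lambda>n. if even n then y^(n div 2) / fact n else 0) sums cosh (sqrt y)"
proof -
  have "(\<lambda>n. if even n then sqrt y ^ n /\<^sub>R fact n else 0) sums cosh (sqrt y)"
    by (rule cosh_converges)
  moreover have "(\<lambda>n. if even n then sqrt y ^ n /\<^sub>R fact n else 0) =
                 (\<lambda>n. if even n then y^(n div 2) / fact n else 0)"
  proof (rule ext)
    fix n :: nat
    show "(if even n then sqrt y ^ n /\<^sub>R fact n else 0) = (if even n then y^(n div 2) / fact n else 0)"
    proof (cases "even n")
      case True
      then obtain k where "n = 2*k" by blast
      then have "sqrt y ^ n = y ^ (n div 2)"
        using assms by (simp add: power_mult real_sqrt_pow2)
      then show ?thesis using True by (simp add: divide_inverse_commute)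
    qed simp
  qed
  ultimately show ?thesis by simp
qed

lemma cosh_sqrt_convex:
  fixes y1 y2 t :: real
  assumes "0 \<le> y1" "0 \<le> y2" "0 \<le> t" "t \<le> 1"
  shows "cosh (sqrt ((1-t)*y1 + t*y2)) \<le> (1-t)*cosh (sqrt y1) + t*cosh (sqrt y2)"
proof -
  define g where "g = (\<lambda>y::real. \<lambda>n::nat. if even n then y^(n div 2) / fact n else 0)"
  have y0: "0 \<le> (1-t)*y1 + t*y2" using assms by simp
  have s0: "g ((1-t)*y1 + t*y2) sums cosh (sqrt ((1-t)*y1 + t*y2))"
    using cosh_sqrt_sums[OF y0] by (simp add: g_def)
  have s1: "(\<lambda>n. (1-t) * g y1 n + t * g y2 n) sums ((1-t)*cosh (sqrt y1) + t*cosh (sqrt y2))"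
    using cosh_sqrt_sums[OF assms(1)] cosh_sqrt_sums[OF assms(2)]
    by (intro sums_add sums_mult) (simp_all add: g_def)
  have le: "g ((1-t)*y1 + t*y2) n \<le> (1-t) * g y1 n + t * g y2 n" for n
  proof (cases "even n")
    case True
    have "((1-t)*y1 + t*y2)^(n div 2) / fact n \<le> ((1-t)*y1^(n div 2) + t*y2^(n div 2)) / fact n"
      using pow_convex[OF assms] by (intro divide_right_mono) auto
    then show ?thesis using True by (simp add: g_def add_divide_distrib)
  qed (simp add: g_def)
  show ?thesis by (rule sums_le[OF le s0 s1])
qed

lemma aux_alg: "(x - q)*(C - d*S) = x*C - q*C - d*S*x + (d*q)*(S::real)"
  by (simp add: algebra_simps)

lemma aux_alg2: "x + x*(C + S - 1 - q) - x*C = S*x - q*(x::real)"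
  by (simp add: algebra_simps)

lemma pinelis_scalar:
  fixes r q c :: real
  assumes r: "0 \<le> r" and q: "0 \<le> q" and c: "\<bar>c\<bar> \<le> q"
  shows "cosh (sqrt (r\<^sup>2 + 2*r*c + q\<^sup>2)) \<le> cosh r + c * sinh r + cosh r * (exp q - 1 - q)"
proof (cases "q = 0")
  case True
  then have "c = 0" using c by simp
  then show ?thesis using True r by simp
next
  case False
  then have qp: "0 < q" using q by simp
  define t where "t = (c + q) / (2*q)"
  have t0: "0 \<le> t" using c qp unfolding t_def by (intro divide_nonneg_pos) auto
  have t1: "t \<le> 1" using c qp unfolding t_def by (simp add: divide_le_eq_1)
  have eq: "r\<^sup>2 + 2*r*c + q\<^sup>2 = (1-t)*(r-q)\<^sup>2 + t*(r+q)\<^sup>2"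
    using qp by (simp add: t_def field_simps power2_eq_square)
  have "cosh (sqrt (r\<^sup>2 + 2*r*c + q\<^sup>2)) \<le> (1-t)*cosh (sqrt ((r-q)\<^sup>2)) + t*cosh (sqrt ((r+q)\<^sup>2))"
    unfolding eq by (rule cosh_sqrt_convex) (use t0 t1 in auto)
  also have "\<dots> = (1-t)*cosh (r-q) + t*cosh (r+q)"
    using r q by (simp add: abs_if)
  also have "\<dots> = cosh r * cosh q + (2*t - 1) * sinh r * sinh q"
    by (simp add: cosh_add cosh_diff algebra_simps)
  also have "\<dots> = cosh r * cosh q + (c/q) * sinh r * sinh q"
  proof -
    have "2*t - 1 = c/q" using qp unfolding t_def by (simp add: diff_divide_distrib add_divide_distrib)
    then show ?thesis by simp
  qed
  also have "\<dots> \<le> cosh r + c * sinh r + cosh r * (exp q - 1 - q)"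
  proof -
    have hs: "q \<le> sinh q" by (rule sinh_ge_self[OF q])
    have cq: "\<bar>c/q\<bar> \<le> 1" using c qp by (simp add: abs_divide divide_le_eq_1)
    have sr: "0 \<le> sinh r" using r by simp
    have "(c/q) * sinh r \<le> cosh r"
    proof -
      have "(c/q) * sinh r \<le> \<bar>c/q\<bar> * sinh r" using sr by (intro mult_right_mono) (rule abs_ge_self)
      also have "\<dots> \<le> 1 * sinh r" using cq sr by (intro mult_right_mono) auto
      also have "\<dots> \<le> cosh r" using sinh_le_cosh_real by simp
      finally show ?thesis .
    qed
    then have "0 \<le> (sinh q - q) * (cosh r - (c/q) * sinh r)"
      using hs by (intro mult_nonneg_nonneg) auto
    moreover have "cosh r + c * sinh r + cosh r * (exp q - 1 - q) - (cosh r * cosh q + (c/q) * sinh r * sinh q)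
        = (sinh q - q) * (cosh r - (c/q) * sinh r)"
    proof -
      have cd: "(c/q) * q = c" using qp by simp
      have e: "exp q = cosh q + sinh q" by (simp add: cosh_plus_sinh)
      have "(sinh q - q) * (cosh r - (c/q) * sinh r) = sinh q * cosh r - q * cosh r - (c/q) * sinh r * sinh q + ((c/q) * q) * sinh r"
        by (rule aux_alg)
      also have "\<dots> = sinh q * cosh r - q * cosh r - (c/q) * sinh r * sinh q + c * sinh r"
        by (simp only: cd)
      finally show ?thesis unfolding e using aux_alg2[of "cosh r" "cosh q" "sinh q" q] by linarith
    qed
    ultimately show ?thesis by linarith
  qed
  finally show ?thesis .
qed




definition ipS :: "nat set \<Rightarrow> (nat \<Rightarrow> complex) \<Rightarrow> (nat \<Rightarrow> complex) \<Rightarrow> real" where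
  "ipS S v w = (\<Sum>s\<in>S. Re (cnj (v s) * w s))"

lemma vnorm2_nonneg: "0 \<le> vnorm2 S v"
  by (simp add: vnorm2_def sum_nonneg)

lemma vnorm2_sq: "(vnorm2 S v)\<^sup>2 = (\<Sum>s\<in>S. (cmod (v s))\<^sup>2)"
  by (simp add: vnorm2_def sum_nonneg)

lemma vnorm2_L2: "vnorm2 S v = L2_set (\<lambda>s. cmod (v s)) S"
  by (simp add: vnorm2_def L2_set_def)

lemma cmod_add_sq: "(cmod (a + b))\<^sup>2 = (cmod a)\<^sup>2 + 2 * Re (cnj a * b) + (cmod b)\<^sup>2"
  by (simp only: cmod_power2) (simp add: power2_eq_square algebra_simps)

lemma vnorm2_add_sq:
  "(vnorm2 S (\<lambda>s. v s + w s))\<^sup>2 = (vnorm2 S v)\<^sup>2 + 2 * ipS S v w + (vnorm2 S w)\<^sup>2"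
  unfolding vnorm2_sq ipS_def cmod_add_sq
  by (simp add: sum.distrib sum_distrib_left)

lemma Re_cnj_mult_le: "\<bar>Re (cnj a * b)\<bar> \<le> cmod a * cmod b"
  by (metis abs_Re_le_cmod complex_mod_cnj norm_mult)

lemma ipS_CS: "\<bar>ipS S v w\<bar> \<le> vnorm2 S v * vnorm2 S w"
proof -
  have "\<bar>ipS S v w\<bar> \<le> (\<Sum>s\<in>S. \<bar>Re (cnj (v s) * w s)\<bar>)"
    unfolding ipS_def by (rule sum_abs)
  also have "\<dots> \<le> (\<Sum>s\<in>S. \<bar>cmod (v s)\<bar> * \<bar>cmod (w s)\<bar>)"
  proof (intro sum_mono)
    fix s show "\<bar>Re (cnj (v s) * w s)\<bar> \<le> \<bar>cmod (v s)\<bar> * \<bar>cmod (w s)\<bar>"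
      using Re_cnj_mult_le[of "v s" "w s"] by simp
  qed
  also have "\<dots> \<le> vnorm2 S v * vnorm2 S w"
    unfolding vnorm2_L2 by (rule L2_set_mult_ineq)
  finally show ?thesis .
qed

lemma vnorm2_triangle: "vnorm2 S (\<lambda>s. v s + w s) \<le> vnorm2 S v + vnorm2 S w"
proof -
  have "(vnorm2 S (\<lambda>s. v s + w s))\<^sup>2 \<le> (vnorm2 S v + vnorm2 S w)\<^sup>2"
    unfolding vnorm2_add_sq using ipS_CS[of S v w]
    by (simp add: power2_eq_square algebra_simps)
  then show ?thesis
    using vnorm2_nonneg[of S v] vnorm2_nonneg[of S w] by (simp add: power2_le_iff_abs_le)
qed

lemma pinelis_vec:
  fixes lam :: real and S :: "nat set" and v w :: "nat \<Rightarrow> complex"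
  assumes lam: "0 \<le> lam"
  defines "r \<equiv> vnorm2 S v" and "q \<equiv> vnorm2 S w"
  shows "cosh (lam * vnorm2 S (\<lambda>s. v s + w s)) \<le>
           cosh (lam * r) + (if r = 0 then 0 else lam * sinh (lam * r) / r) * ipS S v w
           + cosh (lam * r) * (exp (lam * q) - 1 - lam * q)"
proof -
  define c where "c = (if r = 0 then 0 else ipS S v w / r)"
  have r0: "0 \<le> r" and q0: "0 \<le> q" by (simp_all add: r_def q_def vnorm2_nonneg)
  have CS: "\<bar>ipS S v w\<bar> \<le> r * q" using ipS_CS[of S v w] by (simp add: r_def q_def)
  have rc: "r * c = ipS S v w"
    using CS by (auto simp: c_def)
  have cq: "\<bar>c\<bar> \<le> q"
  proof (cases "r = 0")
    case True then show ?thesis using q0 by (simp add: c_def)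
  next
    case False
    then have "0 < r" using r0 by simp
    then show ?thesis using CS by (simp add: c_def abs_divide divide_le_eq mult.commute)
  qed
  have sq: "(vnorm2 S (\<lambda>s. v s + w s))\<^sup>2 = r\<^sup>2 + 2*r*c + q\<^sup>2"
    unfolding vnorm2_add_sq r_def[symmetric] q_def[symmetric] rc[symmetric] by simp
  have "(lam*r)\<^sup>2 + 2*(lam*r)*(lam*c) + (lam*q)\<^sup>2 = (lam * vnorm2 S (\<lambda>s. v s + w s))\<^sup>2"
    by (simp only: power_mult_distrib sq) (simp add: power2_eq_square algebra_simps)
  then have e: "sqrt ((lam*r)\<^sup>2 + 2*(lam*r)*(lam*c) + (lam*q)\<^sup>2) = lam * vnorm2 S (\<lambda>s. v s + w s)"
    using lam vnorm2_nonneg[of S "\<lambda>s. v s + w s"] by simp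
  have "cosh (lam * vnorm2 S (\<lambda>s. v s + w s)) \<le> cosh (lam*r) + (lam*c) * sinh (lam*r) + cosh (lam*r) * (exp (lam*q) - 1 - lam*q)"
    using pinelis_scalar[of "lam*r" "lam*q" "lam*c"] lam r0 q0 cq
    unfolding e by (simp add: abs_mult mult_left_mono)
  also have "(lam*c) * sinh (lam*r) = (if r = 0 then 0 else lam * sinh (lam * r) / r) * ipS S v w"
    by (simp add: c_def)
  finally show ?thesis .
qed




lemma vnorm2_measurable[measurable]:
  assumes [measurable]: "\<And>s. (\<lambda>y. W y s) \<in> borel_measurable N"
  shows "(\<lambda>y. vnorm2 S (W y)) \<in> borel_measurable N"
  unfolding vnorm2_def by measurable

lemma borel_measurable_cosh_real[measurable]:
  assumes [measurable]: "f \<in> borel_measurable M"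
  shows "(\<lambda>x. cosh (f x :: real)) \<in> borel_measurable M"
  unfolding cosh_def by measurable

lemma ipS_integral:
  assumes "finite S" and hint: "\<And>s. s\<in>S \<Longrightarrow> integrable N (\<lambda>y. W y s)"
    and mean: "\<And>s. s\<in>S \<Longrightarrow> integral\<^sup>L N (\<lambda>y. W y s) = 0"
  shows "integrable N (\<lambda>y. ipS S v (W y))" "integral\<^sup>L N (\<lambda>y. ipS S v (W y)) = 0"
proof -
  have i: "integrable N (\<lambda>y. Re (cnj (v s) * W y s))" if "s \<in> S" for s
    using hint[OF that] by (intro integrable_Re integrable_mult_right)
  show "integrable N (\<lambda>y. ipS S v (W y))"
    unfolding ipS_def by (rule Bochner_Integration.integrable_sum) (rule i)
  have "integral\<^sup>L N (\<lambda>y. ipS S v (W y)) = (\<Sum>s\<in>S. integral\<^sup>L N (\<lambda>y. Re (cnj (v s) * W y s)))"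
    unfolding ipS_def by (rule Bochner_Integration.integral_sum) (rule i)
  also have "\<dots> = (\<Sum>s\<in>S. Re (cnj (v s) * integral\<^sup>L N (\<lambda>y. W y s)))"
  proof (rule sum.cong[OF refl])
    fix s assume s: "s \<in> S"
    have "integral\<^sup>L N (\<lambda>y. Re (cnj (v s) * W y s)) = Re (integral\<^sup>L N (\<lambda>y. cnj (v s) * W y s))"
      using hint[OF s] by (intro integral_Re integrable_mult_right)
    then show "integral\<^sup>L N (\<lambda>y. Re (cnj (v s) * W y s)) = Re (cnj (v s) * integral\<^sup>L N (\<lambda>y. W y s))"
      by simp
  qed
  also have "\<dots> = 0" using mean by simp
  finally show "integral\<^sup>L N (\<lambda>y. ipS S v (W y)) = 0" .
qed

lemma cosh_step:
  fixes N :: "'b measure" and W :: "'b \<Rightarrow> nat \<Rightarrow> complex" and v :: "nat \<Rightarrow> complex"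
  assumes N: "prob_space N" and fin: "finite S"
    and meas[measurable]: "\<And>s. (\<lambda>y. W y s) \<in> borel_measurable N"
    and hint: "\<And>s. s\<in>S \<Longrightarrow> integrable N (\<lambda>y. W y s)"
    and mean: "\<And>s. s\<in>S \<Longrightarrow> integral\<^sup>L N (\<lambda>y. W y s) = 0"
    and bnd: "AE y in N. vnorm2 S (W y) \<le> b"
    and lam: "0 \<le> lam" "lam * b < 3" and b0: "0 \<le> b"
  shows "(\<integral>\<^sup>+ y. ennreal (cosh (lam * vnorm2 S (\<lambda>s. v s + W y s))) \<partial>N)
          \<le> ennreal (cosh (lam * vnorm2 S v) *
                exp (lam\<^sup>2 * (\<integral>y. (vnorm2 S (W y))\<^sup>2 \<partial>N) / (2*(1 - lam*b/3))))"
proof -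
  interpret prob_space N by (rule N)
  define r where "r = vnorm2 S v"
  define K where "K = (if r = 0 then 0 else lam * sinh (lam * r) / r)"
  define C where "C = cosh (lam * r)"
  define D where "D = 2*(1 - lam*b/3)"
  define E where "E = (\<integral>y. (vnorm2 S (W y))\<^sup>2 \<partial>N)"
  have D0: "0 < D" using lam by (simp add: D_def mult.commute)
  have C0: "0 \<le> C" by (simp add: C_def)
  have r0: "0 \<le> r" by (simp add: r_def vnorm2_nonneg)
  have mf[measurable]: "(\<lambda>y. vnorm2 S (\<lambda>s. v s + W y s)) \<in> borel_measurable N"
    by (rule vnorm2_measurable) measurable
  have mq[measurable]: "(\<lambda>y. vnorm2 S (W y)) \<in> borel_measurable N"
    by (rule vnorm2_measurable) measurable
  have intf: "integrable N (\<lambda>y. cosh (lam * vnorm2 S (\<lambda>s. v s + W y s)))"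
  proof (rule integrable_const_bound[where B="cosh (lam * (r + b))"])
    show "AE y in N. norm (cosh (lam * vnorm2 S (\<lambda>s. v s + W y s))) \<le> cosh (lam * (r + b))"
      using bnd
    proof eventually_elim
      case (elim y)
      have "vnorm2 S (\<lambda>s. v s + W y s) \<le> r + b"
        using vnorm2_triangle[of S v "W y"] elim by (simp add: r_def)
      then have "lam * vnorm2 S (\<lambda>s. v s + W y s) \<le> lam * (r + b)"
        using lam by (intro mult_left_mono) auto
      then show ?case
        using lam r0 b0 vnorm2_nonneg[of S "\<lambda>s. v s + W y s"]
        by (simp add: cosh_real_nonneg_le_iff)
    qed
  qed measurable
  have intq: "integrable N (\<lambda>y. (vnorm2 S (W y))\<^sup>2)"
  proof (rule integrable_const_bound[where B="b\<^sup>2"])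
    show "AE y in N. norm ((vnorm2 S (W y))\<^sup>2) \<le> b\<^sup>2"
      using bnd by eventually_elim (simp add: vnorm2_nonneg power_mono)
  qed measurable
  have ip: "integrable N (\<lambda>y. ipS S v (W y))" "integral\<^sup>L N (\<lambda>y. ipS S v (W y)) = 0"
    by (rule ipS_integral[OF fin], (rule hint mean; assumption)+)+
  define h where "h = (\<lambda>y. C + K * ipS S v (W y) + C * (lam\<^sup>2 / D) * (vnorm2 S (W y))\<^sup>2)"
  have inth: "integrable N h"
    unfolding h_def using ip(1) intq by (intro Bochner_Integration.integrable_add integrable_mult_right) auto
  have "integral\<^sup>L N h = C + K * 0 + C * (lam\<^sup>2 / D) * E"
    unfolding h_def E_def using ip intq
    by (subst Bochner_Integration.integral_add, (auto intro!: Bochner_Integration.integrable_add integrable_mult_right)[2])+ (simp add: prob_space)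
  then have ih: "integral\<^sup>L N h = C * (1 + lam\<^sup>2 * E / D)"
    by (simp add: algebra_simps)
  have le: "AE y in N. cosh (lam * vnorm2 S (\<lambda>s. v s + W y s)) \<le> h y"
    using bnd
  proof eventually_elim
    case (elim y)
    define q where "q = vnorm2 S (W y)"
    have q0: "0 \<le> q" by (simp add: q_def vnorm2_nonneg)
    have "cosh (lam * vnorm2 S (\<lambda>s. v s + W y s)) \<le> C + K * ipS S v (W y) + C * (exp (lam * q) - 1 - lam * q)"
      unfolding C_def K_def r_def q_def by (rule pinelis_vec[OF lam(1)])
    also have "exp (lam * q) - 1 - lam * q \<le> (lam\<^sup>2 / D) * q\<^sup>2"
    proof -
      have lq: "lam * q \<le> lam * b" using elim lam by (intro mult_left_mono) (auto simp: q_def)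
      have "exp (lam * q) - 1 - lam * q \<le> (lam * q)\<^sup>2 / (2 * (1 - lam * q / 3))"
        using lq lam q0 by (intro exp_bernstein) auto
      also have "\<dots> \<le> (lam * q)\<^sup>2 / D"
        using lq lam q0 D0 unfolding D_def
        by (intro divide_left_mono) (auto intro!: mult_pos_pos)
      finally show ?thesis by (simp add: power_mult_distrib)
    qed
    then have "C * (exp (lam * q) - 1 - lam * q) \<le> C * ((lam\<^sup>2 / D) * q\<^sup>2)"
      using C0 by (rule mult_left_mono)
    finally show ?case by (simp add: h_def q_def mult.assoc)
  qed
  have "integral\<^sup>L N (\<lambda>y. cosh (lam * vnorm2 S (\<lambda>s. v s + W y s))) \<le> C * (1 + lam\<^sup>2 * E / D)"
    using integral_mono_AE[OF intf inth le] ih by simp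
  also have "\<dots> \<le> C * exp (lam\<^sup>2 * E / D)"
    using C0 by (intro mult_left_mono) auto
  finally have "integral\<^sup>L N (\<lambda>y. cosh (lam * vnorm2 S (\<lambda>s. v s + W y s))) \<le> C * exp (lam\<^sup>2 * E / D)" .
  then show ?thesis
    by (subst nn_integral_eq_integral[OF intf]) (auto simp: C_def r_def E_def D_def intro!: ennreal_leI)
qed

lemma sq_step:
  fixes N :: "'b measure" and W :: "'b \<Rightarrow> nat \<Rightarrow> complex" and v :: "nat \<Rightarrow> complex"
  assumes N: "prob_space N" and fin: "finite S"
    and meas[measurable]: "\<And>s. (\<lambda>y. W y s) \<in> borel_measurable N"
    and hint: "\<And>s. s\<in>S \<Longrightarrow> integrable N (\<lambda>y. W y s)"
    and mean: "\<And>s. s\<in>S \<Longrightarrow> integral\<^sup>L N (\<lambda>y. W y s) = 0"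
    and bnd: "AE y in N. vnorm2 S (W y) \<le> b"
  shows "(\<integral>\<^sup>+ y. ennreal ((vnorm2 S (\<lambda>s. v s + W y s))\<^sup>2) \<partial>N)
          \<le> ennreal ((vnorm2 S v)\<^sup>2 + (\<integral>y. (vnorm2 S (W y))\<^sup>2 \<partial>N))"
proof -
  interpret prob_space N by (rule N)
  have mq[measurable]: "(\<lambda>y. vnorm2 S (W y)) \<in> borel_measurable N"
    by (rule vnorm2_measurable) measurable
  have intq: "integrable N (\<lambda>y. (vnorm2 S (W y))\<^sup>2)"
  proof (rule integrable_const_bound[where B="b\<^sup>2"])
    show "AE y in N. norm ((vnorm2 S (W y))\<^sup>2) \<le> b\<^sup>2"
      using bnd by eventually_elim (simp add: vnorm2_nonneg power_mono)
  qed measurable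
  have ip: "integrable N (\<lambda>y. ipS S v (W y))" "integral\<^sup>L N (\<lambda>y. ipS S v (W y)) = 0"
    by (rule ipS_integral[OF fin], (rule hint mean; assumption)+)+
  have eq: "(\<lambda>y. (vnorm2 S (\<lambda>s. v s + W y s))\<^sup>2) = (\<lambda>y. (vnorm2 S v)\<^sup>2 + 2 * ipS S v (W y) + (vnorm2 S (W y))\<^sup>2)"
    by (simp add: vnorm2_add_sq)
  have inte: "integrable N (\<lambda>y. (vnorm2 S v)\<^sup>2 + 2 * ipS S v (W y) + (vnorm2 S (W y))\<^sup>2)"
    using ip(1) intq by (intro Bochner_Integration.integrable_add integrable_mult_right) auto
  have "integral\<^sup>L N (\<lambda>y. (vnorm2 S v)\<^sup>2 + 2 * ipS S v (W y) + (vnorm2 S (W y))\<^sup>2)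
      = (vnorm2 S v)\<^sup>2 + 2 * 0 + (\<integral>y. (vnorm2 S (W y))\<^sup>2 \<partial>N)"
    using ip intq
    by (subst Bochner_Integration.integral_add, (auto intro!: Bochner_Integration.integrable_add integrable_mult_right)[2])+ (simp add: prob_space)
  moreover have "(\<integral>\<^sup>+ y. ennreal ((vnorm2 S (\<lambda>s. v s + W y s))\<^sup>2) \<partial>N) =
     (\<integral>\<^sup>+ y. ennreal ((vnorm2 S v)\<^sup>2 + 2 * ipS S v (W y) + (vnorm2 S (W y))\<^sup>2) \<partial>N)"
    by (simp add: vnorm2_add_sq)
  moreover have "(\<integral>\<^sup>+ y. ennreal ((vnorm2 S v)\<^sup>2 + 2 * ipS S v (W y) + (vnorm2 S (W y))\<^sup>2) \<partial>N)
     = ennreal (integral\<^sup>L N (\<lambda>y. (vnorm2 S v)\<^sup>2 + 2 * ipS S v (W y) + (vnorm2 S (W y))\<^sup>2))"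
    by (rule nn_integral_eq_integral[OF inte]) (simp add: vnorm2_add_sq[symmetric])
  ultimately show ?thesis by simp
qed




lemma sumW_meas:
  fixes W :: "nat \<Rightarrow> 'b \<Rightarrow> nat \<Rightarrow> complex"
  assumes meas: "\<And>l s. (\<lambda>y. W l y s) \<in> borel_measurable (N l)" and J: "J \<subseteq> I"
  shows "(\<lambda>x. \<Sum>l\<in>J. W l (x l) s) \<in> borel_measurable (PiM I N)"
proof (rule borel_measurable_sum)
  fix l assume "l \<in> J"
  then have "l \<in> I" using J by auto
  show "(\<lambda>x. W l (x l) s) \<in> borel_measurable (PiM I N)"
    using measurable_compose[OF measurable_component_singleton[where M=N, OF \<open>l \<in> I\<close>] meas[of l s]] .
qed

lemma prod_induct:
  fixes N :: "nat \<Rightarrow> 'b measure" and W :: "nat \<Rightarrow> 'b \<Rightarrow> nat \<Rightarrow> complex"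
    and g :: "real \<Rightarrow> real" and F \<alpha> \<beta> :: "nat \<Rightarrow> ennreal"
  assumes N: "\<And>l. prob_space (N l)"
    and meas: "\<And>l s. (\<lambda>y. W l y s) \<in> borel_measurable (N l)"
    and g[measurable]: "g \<in> borel_measurable borel"
    and step: "\<And>l v. l < k \<Longrightarrow> (\<integral>\<^sup>+ y. ennreal (g (vnorm2 S (\<lambda>s. v s + W l y s))) \<partial>N l)
                           \<le> \<alpha> l * ennreal (g (vnorm2 S v)) + \<beta> l"
    and F0: "ennreal (g 0) \<le> F 0"
    and Fs: "\<And>l. l < k \<Longrightarrow> \<alpha> l * F l + \<beta> l \<le> F (Suc l)"
  shows "(\<integral>\<^sup>+ x. ennreal (g (vnorm2 S (\<lambda>s. \<Sum>l<k. W l (x l) s))) \<partial>PiM {..<k} N) \<le> F k"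
  using step Fs
proof (induction k)
  case 0
  interpret P: prob_space "PiM {..<0::nat} N" by (rule prob_space_PiM) (rule N)
  have "vnorm2 S (\<lambda>s. 0) = 0" by (simp add: vnorm2_def)
  moreover have "emeasure (PiM {} N) (space (PiM {} N)) = 1" using P.emeasure_space_1 by simp
  ultimately show ?case using F0 by simp
next
  case (Suc k)
  interpret product_sigma_finite N
    by (rule product_sigma_finite.intro) (rule prob_space_imp_sigma_finite[OF N])
  interpret P: prob_space "PiM {..<k} N" by (rule prob_space_PiM) (rule N)
  define T where "T = (\<lambda>x. \<lambda>s. \<Sum>l<k. W l (x l) s)"
  have Tm: "(\<lambda>x. T x s) \<in> borel_measurable (PiM {..<k} N)" for s
    unfolding T_def by (rule sumW_meas[OF meas]) auto
  have fm: "(\<lambda>x. ennreal (g (vnorm2 S (\<lambda>s. \<Sum>l<Suc k. W l (x l) s)))) \<in> borel_measurable (PiM (insert k {..<k}) N)"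
  proof -
    have "(\<lambda>x. vnorm2 S (\<lambda>s. \<Sum>l<Suc k. W l (x l) s)) \<in> borel_measurable (PiM (insert k {..<k}) N)"
      by (rule vnorm2_measurable[where W="\<lambda>x s. \<Sum>l<Suc k. W l (x l) s"], rule sumW_meas[OF meas]) auto
    then show ?thesis by measurable
  qed
  have "(\<integral>\<^sup>+ x. ennreal (g (vnorm2 S (\<lambda>s. \<Sum>l<Suc k. W l (x l) s))) \<partial>PiM {..<Suc k} N)
      = (\<integral>\<^sup>+ x. (\<integral>\<^sup>+ y. ennreal (g (vnorm2 S (\<lambda>s. \<Sum>l<Suc k. W l ((x(k := y)) l) s))) \<partial>N k) \<partial>PiM {..<k} N)"
    using product_nn_integral_insert[OF _ _ fm] by (simp add: lessThan_Suc)
  also have "\<dots> = (\<integral>\<^sup>+ x. (\<integral>\<^sup>+ y. ennreal (g (vnorm2 S (\<lambda>s. T x s + W k y s))) \<partial>N k) \<partial>PiM {..<k} N)"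
    by (simp add: T_def lessThan_Suc add.commute)
  also have "\<dots> \<le> (\<integral>\<^sup>+ x. \<alpha> k * ennreal (g (vnorm2 S (T x))) + \<beta> k \<partial>PiM {..<k} N)"
    by (intro nn_integral_mono Suc.prems(1)) auto
  also have "\<dots> = \<alpha> k * (\<integral>\<^sup>+ x. ennreal (g (vnorm2 S (T x))) \<partial>PiM {..<k} N) + \<beta> k"
  proof -
    have m: "(\<lambda>x. ennreal (g (vnorm2 S (T x)))) \<in> borel_measurable (PiM {..<k} N)"
    proof -
      have "(\<lambda>x. vnorm2 S (T x)) \<in> borel_measurable (PiM {..<k} N)"
        by (rule vnorm2_measurable) (rule Tm)
      then show ?thesis by measurable
    qed
    show ?thesis
      by (subst nn_integral_add) (use m in \<open>auto simp: nn_integral_cmult P.emeasure_space_1\<close>)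
  qed
  also have "\<dots> \<le> \<alpha> k * F k + \<beta> k"
    using Suc.IH[OF Suc.prems(1) Suc.prems(2)] by (auto simp: T_def intro: mult_left_mono add_right_mono)
  also have "\<dots> \<le> F (Suc k)" using Suc.prems(2) by simp
  finally show ?case .
qed




lemma vec_bernstein_prod:
  fixes N :: "nat \<Rightarrow> 'b measure" and W :: "nat \<Rightarrow> 'b \<Rightarrow> nat \<Rightarrow> complex"
  assumes N: "\<And>l. prob_space (N l)" and fin: "finite S"
    and meas: "\<And>l s. (\<lambda>y. W l y s) \<in> borel_measurable (N l)"
    and hint: "\<And>l s. l < m \<Longrightarrow> s\<in>S \<Longrightarrow> integrable (N l) (\<lambda>y. W l y s)"
    and mean: "\<And>l s. l < m \<Longrightarrow> s\<in>S \<Longrightarrow> integral\<^sup>L (N l) (\<lambda>y. W l y s) = 0"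
    and bnd: "\<And>l. l < m \<Longrightarrow> AE y in N l. vnorm2 S (W l y) \<le> b"
    and b0: "0 \<le> b"
    and var: "(\<Sum>l<m. \<integral>y. (vnorm2 S (W l y))\<^sup>2 \<partial>N l) \<le> V"
    and lam: "0 \<le> lam" "lam * b < 3"
  shows "(\<integral>\<^sup>+ x. ennreal (cosh (lam * vnorm2 S (\<lambda>s. \<Sum>l<m. W l (x l) s))) \<partial>PiM {..<m} N)
           \<le> ennreal (exp (lam\<^sup>2 * V / (2*(1 - lam*b/3))))"
    and "(\<integral>\<^sup>+ x. ennreal ((vnorm2 S (\<lambda>s. \<Sum>l<m. W l (x l) s))\<^sup>2) \<partial>PiM {..<m} N) \<le> ennreal V"
proof -
  define \<sigma> where "\<sigma> = (\<lambda>l. \<integral>y. (vnorm2 S (W l y))\<^sup>2 \<partial>N l)"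
  define D where "D = 2*(1 - lam*b/3)"
  have D0: "0 < D" using lam by (simp add: D_def mult.commute)
  have \<sigma>0: "0 \<le> \<sigma> l" for l unfolding \<sigma>_def by (rule integral_nonneg_AE) simp
  have "(\<integral>\<^sup>+ x. ennreal (cosh (lam * vnorm2 S (\<lambda>s. \<Sum>l<m. W l (x l) s))) \<partial>PiM {..<m} N)
           \<le> ennreal (exp (lam\<^sup>2 * (\<Sum>l<m. \<sigma> l) / D))"
  proof (rule prod_induct[where g="\<lambda>x. cosh (lam * x)" and \<alpha>="\<lambda>l. ennreal (exp (lam\<^sup>2 * \<sigma> l / D))"
        and \<beta>="\<lambda>_. 0" and F="\<lambda>k. ennreal (exp (lam\<^sup>2 * (\<Sum>l<k. \<sigma> l) / D))", OF N meas])
    show "(\<lambda>x. cosh (lam * x)) \<in> borel_measurable borel" by measurable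
  next
    fix l v assume l: "l < m"
    have "(\<integral>\<^sup>+ y. ennreal (cosh (lam * vnorm2 S (\<lambda>s. v s + W l y s))) \<partial>N l)
        \<le> ennreal (cosh (lam * vnorm2 S v) * exp (lam\<^sup>2 * \<sigma> l / D))"
      unfolding \<sigma>_def D_def
      by (rule cosh_step[OF N fin meas hint mean bnd lam b0]) (use l in auto)
    also have "\<dots> = ennreal (exp (lam\<^sup>2 * \<sigma> l / D)) * ennreal (cosh (lam * vnorm2 S v))"
      by (simp add: ennreal_mult' mult.commute)
    finally show "(\<integral>\<^sup>+ y. ennreal (cosh (lam * vnorm2 S (\<lambda>s. v s + W l y s))) \<partial>N l)
        \<le> ennreal (exp (lam\<^sup>2 * \<sigma> l / D)) * ennreal (cosh (lam * vnorm2 S v)) + 0" by simp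
  next
    show "ennreal (cosh (lam * 0)) \<le> ennreal (exp (lam\<^sup>2 * (\<Sum>l<0. \<sigma> l) / D))" by simp
  next
    fix l
    have a: "lam\<^sup>2 * \<sigma> l / D + lam\<^sup>2 * (\<Sum>l<l. \<sigma> l) / D = lam\<^sup>2 * (\<Sum>l<Suc l. \<sigma> l) / D"
      by (simp add: add_divide_distrib[symmetric] distrib_left[symmetric])
    have "exp (lam\<^sup>2 * \<sigma> l / D) * exp (lam\<^sup>2 * (\<Sum>l<l. \<sigma> l) / D) = exp (lam\<^sup>2 * (\<Sum>l<Suc l. \<sigma> l) / D)"
      unfolding a[symmetric] by (rule exp_add[symmetric])
    then show "ennreal (exp (lam\<^sup>2 * \<sigma> l / D)) * ennreal (exp (lam\<^sup>2 * (\<Sum>l<l. \<sigma> l) / D)) + 0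
          \<le> ennreal (exp (lam\<^sup>2 * (\<Sum>l<Suc l. \<sigma> l) / D))"
      by (simp add: ennreal_mult'[symmetric])
  qed
  also have "\<dots> \<le> ennreal (exp (lam\<^sup>2 * V / D))"
  proof -
    have "lam\<^sup>2 * (\<Sum>l<m. \<sigma> l) / D \<le> lam\<^sup>2 * V / D"
      using var D0 by (intro divide_right_mono mult_left_mono) (auto simp: \<sigma>_def)
    then show ?thesis by (intro ennreal_leI) simp
  qed
  finally show "(\<integral>\<^sup>+ x. ennreal (cosh (lam * vnorm2 S (\<lambda>s. \<Sum>l<m. W l (x l) s))) \<partial>PiM {..<m} N)
           \<le> ennreal (exp (lam\<^sup>2 * V / (2*(1 - lam*b/3))))" by (simp add: D_def)
  have "(\<integral>\<^sup>+ x. ennreal ((vnorm2 S (\<lambda>s. \<Sum>l<m. W l (x l) s))\<^sup>2) \<partial>PiM {..<m} N)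
           \<le> ennreal (\<Sum>l<m. \<sigma> l)"
  proof (rule prod_induct[where g="\<lambda>x. x\<^sup>2" and \<alpha>="\<lambda>l. 1"
        and \<beta>="\<lambda>l. ennreal (\<sigma> l)" and F="\<lambda>k. ennreal (\<Sum>l<k. \<sigma> l)", OF N meas])
    show "(\<lambda>x::real. x\<^sup>2) \<in> borel_measurable borel" by measurable
  next
    fix l v assume l: "l < m"
    have "(\<integral>\<^sup>+ y. ennreal ((vnorm2 S (\<lambda>s. v s + W l y s))\<^sup>2) \<partial>N l)
        \<le> ennreal ((vnorm2 S v)\<^sup>2 + \<sigma> l)"
      unfolding \<sigma>_def
      by (rule sq_step[OF N fin meas hint mean bnd]) (use l in auto)
    also have "\<dots> = 1 * ennreal ((vnorm2 S v)\<^sup>2) + ennreal (\<sigma> l)"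
      using \<sigma>0 by (simp add: ennreal_plus)
    finally show "(\<integral>\<^sup>+ y. ennreal ((vnorm2 S (\<lambda>s. v s + W l y s))\<^sup>2) \<partial>N l)
        \<le> 1 * ennreal ((vnorm2 S v)\<^sup>2) + ennreal (\<sigma> l)" .
  next
    show "ennreal (0\<^sup>2) \<le> ennreal (\<Sum>l<0. \<sigma> l)" by simp
  next
    fix l
    show "1 * ennreal (\<Sum>l<l. \<sigma> l) + ennreal (\<sigma> l) \<le> ennreal (\<Sum>l<Suc l. \<sigma> l)"
    proof -
      have "ennreal (\<Sum>l<l. \<sigma> l) + ennreal (\<sigma> l) = ennreal ((\<Sum>l<l. \<sigma> l) + \<sigma> l)"
        by (rule ennreal_plus[symmetric]) (use \<sigma>0 in \<open>auto intro: sum_nonneg\<close>)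
      then show ?thesis by simp
    qed
  qed
  also have "\<dots> \<le> ennreal V" using var by (intro ennreal_leI) (simp add: \<sigma>_def)
  finally show "(\<integral>\<^sup>+ x. ennreal ((vnorm2 S (\<lambda>s. \<Sum>l<m. W l (x l) s))\<^sup>2) \<partial>PiM {..<m} N) \<le> ennreal V" .
qed




lemma final_real:
  fixes \<Theta> mm t P :: real
  assumes Th: "0 < \<Theta>" and mm: "0 < mm" and t: "0 < t" and P0: "0 \<le> P"
  defines "a \<equiv> sqrt (\<Theta> / mm)"
  defines "D \<equiv> \<Theta> * (1 + 4 * a + 2 * t / 3)"
  assumes cheb: "P \<le> mm * \<Theta> / (mm * (a + t))\<^sup>2"
    and expb: "P \<le> 2 * exp ((t/D)\<^sup>2 * (mm * \<Theta>) / (2 * (1 - (t/D) * (2*\<Theta>) / 3)) - (t/D) * (mm * (a + t)))"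
  shows "P \<le> exp (- ((mm * t\<^sup>2 / 2) / D))"
proof -
  have a0: "0 < a" using Th mm by (simp add: a_def)
  have Tha: "\<Theta> = mm * a\<^sup>2" using Th mm by (simp add: a_def)
  have D0: "0 < D" using Th a0 t by (simp add: D_def)
  have DTh: "\<Theta> \<le> D" using Th a0 t by (simp add: D_def)
  define u where "u = t / a"
  have u0: "0 < u" using t a0 by (simp add: u_def)
  have tu: "t = a * u" using a0 by (simp add: u_def)
  define ET where "ET = (mm * t\<^sup>2 / 2) / D"
  have ET0: "0 \<le> ET" using mm D0 by (simp add: ET_def)
  have ETu: "ET \<le> u\<^sup>2 / 2"
  proof -
    have "ET \<le> (mm * t\<^sup>2 / 2) / \<Theta>" unfolding ET_def
      using DTh Th mm by (intro divide_left_mono) auto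
    also have "\<dots> = u\<^sup>2 / 2" using a0 mm by (simp add: Tha tu power2_eq_square)
    finally show ?thesis .
  qed
  show ?thesis
  proof (cases "ET \<le> 2 * ln (1 + u)")
    case True
    have e1: "mm*(a+t) = (mm*a)*(1+u)" by (simp add: tu algebra_simps)
    have e2: "mm*\<Theta> = (mm*a)\<^sup>2" by (simp add: Tha power2_eq_square)
    have nz: "(mm*a)\<^sup>2 \<noteq> 0" using a0 mm by simp
    have "mm * \<Theta> / (mm * (a + t))\<^sup>2 = 1 / (1 + u)\<^sup>2"
      unfolding e1 e2 power_mult_distrib using nz by simp
    also have "\<dots> = exp (- (2 * ln (1 + u)))"
    proof -
      have "exp (2 * ln (1 + u)) = (1 + u)\<^sup>2"
        using u0 by (subst ln_realpow[of "1+u" 2, simplified, symmetric]) simp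
      then show ?thesis by (simp add: exp_minus divide_inverse)
    qed
    also have "\<dots> \<le> exp (- ET)" using True by simp
    finally show ?thesis using cheb by (simp add: ET_def)
  next
    case False
    have u2: "2 < u"
    proof (rule ccontr)
      assume "\<not> 2 < u"
      then have "u\<^sup>2 / 4 \<le> ln (1 + u)" using u0 by (intro ln_lower) auto
      then show False using False ETu by simp
    qed
    define X where "X = (t/D)\<^sup>2 * (mm * \<Theta>) / (2 * (1 - (t/D) * (2*\<Theta>) / 3)) - (t/D) * (mm * (a + t))"
    define Z where "Z = mm * a * t / D"
    have one: "1 - (t/D) * (2*\<Theta>) / 3 = \<Theta> * (1 + 4*a) / D"
      using D0 by (simp add: D_def field_simps)
    have X: "X = ET / (1 + 4*a) - 2 * ET - Z"
    proof -
      have "(t/D)\<^sup>2 * (mm * \<Theta>) / (2 * (1 - (t/D) * (2*\<Theta>) / 3)) = ET / (1 + 4*a)"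
      proof -
        define c where "c = 1 + 4*a"
        have c0: "c \<noteq> 0" "D \<noteq> 0" "\<Theta> \<noteq> 0" using a0 D0 Th by (auto simp: c_def)
        have "(t/D)\<^sup>2 * (mm * \<Theta>) / (2 * (\<Theta> * c / D)) = mm * t\<^sup>2 / (2 * D * c)"
          using c0 by (simp add: field_simps power2_eq_square)
        moreover have "ET / c = mm * t\<^sup>2 / (2 * D * c)"
          using c0 by (simp add: ET_def field_simps)
        ultimately show ?thesis unfolding one c_def by simp
      qed
      moreover have "(t/D) * (mm * (a + t)) = 2 * ET + Z"
        unfolding ET_def Z_def using D0 by (simp add: field_simps power2_eq_square)
      ultimately show ?thesis unfolding X_def by simp
    qed
    have key: "ln 2 \<le> ET * (4*a / (1 + 4*a)) + Z"
    proof (cases "1/8 \<le> a")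
      case True
      have "1/3 \<le> 4*a / (1 + 4*a)" using True by (simp add: field_simps)
      have l3: "ln 3 \<le> ln (1 + u)" using u2 by simp
      have "3 * ln 2 \<le> 2 * ln (3::real)"
      proof -
        have "3 * ln 2 = ln ((2::real)^3)" by (simp only: ln_realpow)
        also have "\<dots> \<le> ln ((3::real)^2)" by simp
        also have "\<dots> = 2 * ln 3" by (simp only: ln_realpow)
        finally show ?thesis .
      qed
      then have "ln 2 \<le> ET / 3" using False l3 by simp
      also have "\<dots> \<le> ET * (4*a / (1 + 4*a))"
      proof -
        have "ET * (1/3) \<le> ET * (4*a / (1 + 4*a))"
          using \<open>1/3 \<le> 4*a / (1 + 4*a)\<close> ET0 by (rule mult_left_mono)
        then show ?thesis by simp
      qed
      also have "\<dots> \<le> ET * (4*a / (1 + 4*a)) + Z"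
        using mm a0 t D0 by (simp add: Z_def)
      finally show ?thesis .
    next
      case False
      have Zu: "Z = u / (1 + 4*a + 2*a*u/3)"
      proof -
        have e1: "D = (mm*a*a) * (1 + 4*a + 2*a*u/3)" unfolding D_def Tha tu by (simp add: power2_eq_square)
        have e2: "mm * a * t = (mm*a*a) * u" unfolding tu by simp
        have nz: "mm*a*a \<noteq> 0" using a0 mm by simp
        show ?thesis unfolding Z_def e1 e2 using nz by (rule mult_divide_mult_cancel_left)
      qed
      have "0 \<le> 2*a*u/3" using a0 u0 by simp
      then have den: "0 < 1 + 4*a + 2*a*u/3" using a0 by linarith
      have "1 + 4*a + 2*a*u/3 \<le> u"
      proof -
        have "2*a*u/3 \<le> u / 12" using False u0 by (simp add: field_simps)
        then show ?thesis using False u2 by linarith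
      qed
      then have "1 \<le> Z" unfolding Zu using den by simp
      moreover have "0 \<le> ET * (4*a / (1 + 4*a))" using ET0 a0 by simp
      ultimately show ?thesis using ln_2_less_1 by simp
    qed
    have "P \<le> 2 * exp X" using expb by (simp add: X_def)
    also have "\<dots> = exp (ln 2 + X)" by (simp add: exp_add)
    also have "\<dots> \<le> exp (- ET)"
    proof -
      have "ET / (1 + 4*a) = ET - ET * (4*a / (1 + 4*a))"
        using a0 by (simp add: field_simps)
      then have "ln 2 + X \<le> - ET" using key unfolding X by simp
      then show ?thesis by simp
    qed
    finally show ?thesis by (simp add: ET_def)
  qed
qed




lemma cnj_mult_self: "cnj z * z = complex_of_real ((cmod z)\<^sup>2)"
  by (metis complex_norm_square mult.commute)

lemma sum_cmod_sq_Re: "(\<Sum>s\<in>S. (cmod (y s))\<^sup>2) = Re (\<Sum>s\<in>S. cnj (y s) * y s)"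
  by (simp add: cnj_mult_self Re_sum)

lemma vnorm2_scale: "vnorm2 S (\<lambda>s. c * v s) = cmod c * vnorm2 S v"
  by (simp add: vnorm2_def norm_mult power_mult_distrib sum_distrib_left[symmetric] real_sqrt_mult)

lemma Re_le_L2:
  fixes b z :: "nat \<Rightarrow> complex"
  shows "Re (\<Sum>k\<in>K. b k * cnj (z k)) \<le> vnorm2 K b * vnorm2 K z"
proof -
  have "Re (\<Sum>k\<in>K. b k * cnj (z k)) \<le> cmod (\<Sum>k\<in>K. b k * cnj (z k))" by (rule complex_Re_le_cmod)
  also have "\<dots> \<le> (\<Sum>k\<in>K. cmod (b k * cnj (z k)))" by (rule norm_sum)
  also have "\<dots> = (\<Sum>k\<in>K. \<bar>cmod (b k)\<bar> * \<bar>cmod (z k)\<bar>)" by (simp add: norm_mult)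
  also have "\<dots> \<le> vnorm2 K b * vnorm2 K z" unfolding vnorm2_L2 by (rule L2_set_mult_ineq)
  finally show ?thesis .
qed

lemma norm_2_2_bound:
  fixes G :: "nat \<Rightarrow> nat \<Rightarrow> complex" and y :: "nat \<Rightarrow> complex"
  assumes fin: "finite S"
  shows "vnorm2 S (\<lambda>s. \<Sum>s'\<in>S. G s s' * y s') \<le> norm_2_2 S S G * vnorm2 S y"
proof (cases "vnorm2 S y = 0")
  case True
  then have "\<forall>s\<in>S. y s = 0" using fin by (simp add: vnorm2_def sum_nonneg_eq_0_iff)
  then have "vnorm2 S (\<lambda>s. \<Sum>s'\<in>S. G s s' * y s') = 0" by (simp add: vnorm2_def)
  then show ?thesis using True by simp
next
  case False
  define c where "c = vnorm2 S y"
  have c0: "0 < c" using False vnorm2_nonneg[of S y] by (simp add: c_def)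
  define x where "x = (\<lambda>j. complex_of_real (1/c) * y j)"
  define Q where "Q = {sqrt (\<Sum>i\<in>S. (cmod (\<Sum>j\<in>S. G i j * x j))\<^sup>2) | x.
                          (\<Sum>j\<in>S. (cmod (x j))\<^sup>2) \<le> 1}"
  have xn: "vnorm2 S x = 1"
  proof -
    have "cmod (complex_of_real (1/c)) = 1/c" by (simp only: norm_of_real) (use c0 in simp)
    then show ?thesis unfolding x_def vnorm2_scale using c0 by (simp add: c_def)
  qed
  have xin: "(\<Sum>j\<in>S. (cmod (x j))\<^sup>2) \<le> 1" using xn by (simp add: vnorm2_sq[symmetric])
  have bdd: "bdd_above Q"
  proof (rule bdd_aboveI)
    fix e assume "e \<in> Q"
    then obtain x' where e: "e = sqrt (\<Sum>i\<in>S. (cmod (\<Sum>j\<in>S. G i j * x' j))\<^sup>2)"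
      and x': "(\<Sum>j\<in>S. (cmod (x' j))\<^sup>2) \<le> 1" unfolding Q_def by blast
    have xj: "cmod (x' j) \<le> 1" if "j \<in> S" for j
    proof -
      have "(cmod (x' j))\<^sup>2 \<le> (\<Sum>j\<in>S. (cmod (x' j))\<^sup>2)"
        using fin that by (intro member_le_sum) auto
      then have "(cmod (x' j))\<^sup>2 \<le> 1\<^sup>2" using x' by simp
      then show ?thesis by (rule power2_le_imp_le) simp
    qed
    have "e = L2_set (\<lambda>i. cmod (\<Sum>j\<in>S. G i j * x' j)) S" by (simp add: e L2_set_def)
    also have "\<dots> \<le> (\<Sum>i\<in>S. cmod (\<Sum>j\<in>S. G i j * x' j))" by (rule L2_set_le_sum) simp
    also have "\<dots> \<le> (\<Sum>i\<in>S. \<Sum>j\<in>S. cmod (G i j))"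
    proof (rule sum_mono)
      fix i assume "i \<in> S"
      have "cmod (\<Sum>j\<in>S. G i j * x' j) \<le> (\<Sum>j\<in>S. cmod (G i j * x' j))" by (rule norm_sum)
      also have "\<dots> \<le> (\<Sum>j\<in>S. cmod (G i j))"
      proof (rule sum_mono)
        fix j assume "j \<in> S"
        then show "cmod (G i j * x' j) \<le> cmod (G i j)"
          using xj[of j] by (simp add: norm_mult mult_left_le)
      qed
      finally show "cmod (\<Sum>j\<in>S. G i j * x' j) \<le> (\<Sum>j\<in>S. cmod (G i j))" .
    qed
    finally show "e \<le> (\<Sum>i\<in>S. \<Sum>j\<in>S. cmod (G i j))" .
  qed
  have "vnorm2 S (\<lambda>s. \<Sum>s'\<in>S. G s s' * x s') \<in> Q"
    unfolding Q_def vnorm2_def using xin by blast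
  then have le: "vnorm2 S (\<lambda>s. \<Sum>s'\<in>S. G s s' * x s') \<le> norm_2_2 S S G"
    unfolding norm_2_2_def Q_def[symmetric] using bdd by (rule cSup_upper)
  have "vnorm2 S (\<lambda>s. \<Sum>s'\<in>S. G s s' * x s') = (1/c) * vnorm2 S (\<lambda>s. \<Sum>s'\<in>S. G s s' * y s')"
  proof -
    have "(\<lambda>s. \<Sum>s'\<in>S. G s s' * x s') = (\<lambda>s. complex_of_real (1/c) * (\<Sum>s'\<in>S. G s s' * y s'))"
      by (simp add: x_def sum_distrib_left mult.left_commute)
    then have "vnorm2 S (\<lambda>s. \<Sum>s'\<in>S. G s s' * x s') = cmod (complex_of_real (1/c)) * vnorm2 S (\<lambda>s. \<Sum>s'\<in>S. G s s' * y s')"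
      by (simp only: vnorm2_scale)
    moreover have "cmod (complex_of_real (1/c)) = 1/c" by (simp only: norm_of_real) (use c0 in simp)
    ultimately show ?thesis by simp
  qed
  then have "(1/c) * vnorm2 S (\<lambda>s. \<Sum>s'\<in>S. G s s' * y s') \<le> norm_2_2 S S G" using le by simp
  then show ?thesis using c0 by (simp add: c_def field_simps)
qed




lemma gram_var_bound:
  fixes Bm :: "nat \<times> nat \<Rightarrow> complex" and p i :: nat
  assumes fin: "finite S" and L: "norm_2_2 S S (gram p Bm) \<le> \<Lambda>" and L0: "0 \<le> \<Lambda>"
  shows "(vnorm2 S (\<lambda>s. gram p Bm s i))\<^sup>2 \<le> \<Lambda> * (\<Sum>k<p. (cmod (Bm (k,i)))\<^sup>2)"
proof -
  define y where "y = (\<lambda>s. gram p Bm s i)"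
  define b where "b = (\<lambda>k. Bm (k,i))"
  define yc where "yc = (\<lambda>s. cnj (y s))"
  define z where "z = (\<lambda>k. \<Sum>s\<in>S. Bm (k,s) * y s)"
  define zc where "zc = (\<lambda>k. cnj (z k))"
  define w where "w = (\<lambda>s. \<Sum>k<p. cnj (Bm (k,s)) * z k)"
  have ys: "y s = (\<Sum>k<p. cnj (Bm (k,s)) * b k)" for s by (simp add: y_def b_def gram_def)
  have e1: "(\<Sum>s\<in>S. yc s * y s) = (\<Sum>k<p. b k * cnj (z k))"
  proof -
    have "(\<Sum>s\<in>S. yc s * y s) = (\<Sum>s\<in>S. \<Sum>k<p. yc s * (cnj (Bm (k,s)) * b k))"
      by (simp add: ys sum_distrib_left)
    also have "\<dots> = (\<Sum>k<p. \<Sum>s\<in>S. yc s * (cnj (Bm (k,s)) * b k))" by (rule sum.swap)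
    also have "\<dots> = (\<Sum>k<p. b k * (\<Sum>s\<in>S. cnj (Bm (k,s)) * yc s))"
      by (simp add: sum_distrib_left mult_ac)
    also have "\<dots> = (\<Sum>k<p. b k * cnj (z k))"
      by (simp add: z_def yc_def cnj_sum)
    finally show ?thesis .
  qed
  have wy: "w s = (\<Sum>s'\<in>S. gram p Bm s s' * y s')" for s
  proof -
    have "w s = (\<Sum>k<p. \<Sum>s'\<in>S. cnj (Bm (k,s)) * (Bm (k,s') * y s'))"
      by (simp add: w_def z_def sum_distrib_left)
    also have "\<dots> = (\<Sum>s'\<in>S. \<Sum>k<p. cnj (Bm (k,s)) * (Bm (k,s') * y s'))" by (rule sum.swap)
    also have "\<dots> = (\<Sum>s'\<in>S. gram p Bm s s' * y s')"
      by (simp add: gram_def sum_distrib_left sum_distrib_right mult_ac)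
    finally show ?thesis .
  qed
  have e2: "(\<Sum>k<p. zc k * z k) = (\<Sum>s\<in>S. y s * cnj (w s))"
  proof -
    have "(\<Sum>k<p. zc k * z k) = (\<Sum>k<p. \<Sum>s\<in>S. zc k * (Bm (k,s) * y s))"
      by (simp add: z_def sum_distrib_left)
    also have "\<dots> = (\<Sum>s\<in>S. \<Sum>k<p. zc k * (Bm (k,s) * y s))" by (rule sum.swap)
    also have "\<dots> = (\<Sum>s\<in>S. y s * (\<Sum>k<p. Bm (k,s) * zc k))"
      by (simp add: sum_distrib_left mult_ac)
    also have "\<dots> = (\<Sum>s\<in>S. y s * cnj (w s))"
      by (simp add: w_def zc_def cnj_sum)
    finally show ?thesis .
  qed
  have Y2: "(vnorm2 S y)\<^sup>2 \<le> vnorm2 {..<p} b * vnorm2 {..<p} z"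
  proof -
    have "(vnorm2 S y)\<^sup>2 = Re (\<Sum>s\<in>S. yc s * y s)"
      unfolding vnorm2_sq yc_def by (rule sum_cmod_sq_Re)
    also have "\<dots> = Re (\<Sum>k<p. b k * cnj (z k))" by (simp only: e1)
    also have "\<dots> \<le> vnorm2 {..<p} b * vnorm2 {..<p} z" by (rule Re_le_L2)
    finally show ?thesis .
  qed
  have Z2: "(vnorm2 {..<p} z)\<^sup>2 \<le> \<Lambda> * (vnorm2 S y)\<^sup>2"
  proof -
    have "(vnorm2 {..<p} z)\<^sup>2 = Re (\<Sum>k<p. zc k * z k)"
      unfolding vnorm2_sq zc_def by (rule sum_cmod_sq_Re)
    also have "\<dots> = Re (\<Sum>s\<in>S. y s * cnj (w s))" by (simp only: e2)
    also have "\<dots> \<le> vnorm2 S y * vnorm2 S w" by (rule Re_le_L2)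
    also have "\<dots> \<le> vnorm2 S y * (\<Lambda> * vnorm2 S y)"
    proof (rule mult_left_mono[OF _ vnorm2_nonneg])
      have "vnorm2 S w = vnorm2 S (\<lambda>s. \<Sum>s'\<in>S. gram p Bm s s' * y s')"
        by (rule arg_cong[where f="vnorm2 S"]) (rule ext, rule wy)
      also have "\<dots> \<le> norm_2_2 S S (gram p Bm) * vnorm2 S y" by (rule norm_2_2_bound[OF fin])
      also have "\<dots> \<le> \<Lambda> * vnorm2 S y" using L by (intro mult_right_mono vnorm2_nonneg)
      finally show "vnorm2 S w \<le> \<Lambda> * vnorm2 S y" .
    qed
    finally show ?thesis by (simp add: power2_eq_square mult_ac)
  qed
  have "(vnorm2 S y)\<^sup>2 \<le> \<Lambda> * (vnorm2 {..<p} b)\<^sup>2"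
  proof (cases "vnorm2 S y = 0")
    case True then show ?thesis using L0 by simp
  next
    case False
    then have yp: "0 < vnorm2 S y" using vnorm2_nonneg[of S y] by simp
    have "vnorm2 {..<p} z \<le> sqrt \<Lambda> * vnorm2 S y"
    proof -
      have "(vnorm2 {..<p} z)\<^sup>2 \<le> (sqrt \<Lambda> * vnorm2 S y)\<^sup>2"
        using Z2 L0 by (simp add: power_mult_distrib)
      then show ?thesis
        by (rule power2_le_imp_le) (use L0 yp in simp)
    qed
    then have "vnorm2 {..<p} b * vnorm2 {..<p} z \<le> vnorm2 {..<p} b * (sqrt \<Lambda> * vnorm2 S y)"
      by (rule mult_left_mono[OF _ vnorm2_nonneg])
    then have "vnorm2 S y * vnorm2 S y \<le> (vnorm2 {..<p} b * sqrt \<Lambda>) * vnorm2 S y"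
      using Y2 unfolding power2_eq_square mult.assoc by linarith
    then have "vnorm2 S y \<le> vnorm2 {..<p} b * sqrt \<Lambda>"
      using yp by (rule mult_right_le_imp_le)
    then have "(vnorm2 S y)\<^sup>2 \<le> (vnorm2 {..<p} b * sqrt \<Lambda>)\<^sup>2"
      using yp by (intro power_mono) auto
    then show ?thesis using L0 by (simp add: power_mult_distrib mult_ac)
  qed
  then show ?thesis by (simp add: y_def b_def vnorm2_sq)
qed




lemma borel_measurable_cnj'[measurable]:
  assumes f: "f \<in> borel_measurable M"
  shows "(\<lambda>x. cnj (f x)) \<in> borel_measurable M"
proof -
  have "(\<lambda>z::complex. cnj z) \<in> borel_measurable borel"
    by (rule borel_measurable_continuous_onI) (intro continuous_intros)
  from measurable_compose[OF f this] show ?thesis .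
qed

lemma gram_meas:
  assumes "j < n" "j' < n"
  shows "(\<lambda>y. gram p y j j') \<in> borel_measurable (cmat_space p n)"
  unfolding gram_def
proof (rule borel_measurable_sum)
  fix k assume k: "k \<in> {..<p}"
  have c1: "(\<lambda>y. y (k,j)) \<in> borel_measurable (cmat_space p n)"
    unfolding cmat_space_def by (rule measurable_component_singleton) (use k assms in auto)
  have c2: "(\<lambda>y. y (k,j')) \<in> borel_measurable (cmat_space p n)"
    unfolding cmat_space_def by (rule measurable_component_singleton) (use k assms in auto)
  show "(\<lambda>y. cnj (y (k, j)) * y (k, j')) \<in> borel_measurable (cmat_space p n)"
    by (rule borel_measurable_times[OF borel_measurable_cnj'[OF c1] c2])
qed

lemma row_bound:
  assumes "finite S" "i < n" "norm_inf_inf {..<n} S G \<le> \<Theta>"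
  shows "(\<Sum>j\<in>S. cmod (G i j)) \<le> \<Theta>"
proof -
  have "(\<Sum>j\<in>S. cmod (G i j)) \<le> Max (insert 0 ((\<lambda>i. \<Sum>j\<in>S. cmod (G i j)) ` {..<n}))"
    using assms by (intro Max_ge) auto
  then show ?thesis using assms(2,3) by (simp add: norm_inf_inf_def)
qed

lemma gram_cnj: "gram p B s i = cnj (gram p B i s)"
  by (simp add: gram_def cnj_sum mult.commute)

lemma vnorm2_le_l1: "vnorm2 S v \<le> (\<Sum>s\<in>S. cmod (v s))"
  unfolding vnorm2_L2 by (rule L2_set_le_sum) simp

lemma vnorm2_cong: "(\<And>s. s\<in>S \<Longrightarrow> v s = w s) \<Longrightarrow> vnorm2 S v = vnorm2 S w"
  by (simp add: vnorm2_def)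

lemma gram_diag: "gram p B i i = complex_of_real (\<Sum>k<p. (cmod (B (k,i)))\<^sup>2)"
  by (simp add: gram_def cnj_mult_self)

lemma vnorm2_uminus: "vnorm2 S (\<lambda>s. - v s) = vnorm2 S v"
  by (simp add: vnorm2_def)

lemma ASAe_eq:
  assumes m: "m \<ge> 1"
  shows "ASAe m p Bs i s = (\<Sum>l<m. gram (p l) (Bs l) s i) / of_nat m"
proof -
  have fin: "finite (stack_rows m p)" by (simp add: stack_rows_def)
  have "ASAe m p Bs i s = (\<Sum>(l,k)\<in>Sigma {..<m} (\<lambda>l. {..<p l}). cnj (Bs l (k, s) / complex_of_real (sqrt (real m))) *
                                        (Bs l (k, i) / complex_of_real (sqrt (real m))))"
    unfolding ASAe_def stack_rows_def stackA_def by (rule sum.cong) auto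
  also have "\<dots> = (\<Sum>l<m. \<Sum>k<p l. cnj (Bs l (k, s) / complex_of_real (sqrt (real m))) *
                                        (Bs l (k, i) / complex_of_real (sqrt (real m))))"
    by (rule sum.Sigma[symmetric]) auto
  also have "\<dots> = (\<Sum>l<m. \<Sum>k<p l. cnj (Bs l (k, s)) * Bs l (k, i) / of_nat m)"
  proof -
    have "complex_of_real (sqrt (real m)) * complex_of_real (sqrt (real m)) = of_nat m"
      by (simp flip: of_real_mult)
    then show ?thesis by (simp add: field_simps)
  qed
  also have "\<dots> = (\<Sum>l<m. gram (p l) (Bs l) s i) / of_nat m"
    by (simp add: gram_def sum_divide_distrib)
  finally show ?thesis .
qed




context
  fixes M :: "'a measure" and n m :: nat and p :: "nat \<Rightarrow> nat"
    and B :: "nat \<Rightarrow> 'a \<Rightarrow> (nat \<times> nat \<Rightarrow> complex)"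
    and S :: "nat set" and \<Theta> t :: real and i :: nat
  assumes PM: "prob_space M" and m1: "m \<ge> 1"
    and indep: "prob_space.indep_vars M (\<lambda>l. cmat_space (p l) n) B {..<m}"
    and integr: "\<forall>l<m. \<forall>j<n. \<forall>j'<n. integrable M (\<lambda>\<omega>. gram (p l) (B l \<omega>) j j')"
    and isotropy: "\<forall>j<n. \<forall>j'<n.
          (1 / of_nat m) * (\<Sum>l<m. integral\<^sup>L M (\<lambda>\<omega>. gram (p l) (B l \<omega>) j j'))
            = (if j = j' then 1 else 0)"
    and Ssub: "S \<subseteq> {..<n}" and Th: "\<Theta> > 0"
    and Theta: "AE \<omega> in M. \<forall>l<m. norm_inf_inf {..<n} S (gram (p l) (B l \<omega>)) \<le> \<Theta>"
    and Lambda: "\<exists>\<Lambda>::real. \<Lambda> > 0 \<and>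
          (AE \<omega> in M. \<forall>l<m. norm_2_2 S S (gram (p l) (B l \<omega>)) \<le> \<Lambda>) \<and> \<Theta> \<ge> \<Lambda>"
    and tpos: "t > 0" and iL: "i < n" and iS: "i \<notin> S"
begin

lemma finS: "finite S" using Ssub finite_subset by blast

lemma rvB: "l < m \<Longrightarrow> B l \<in> measurable M (cmat_space (p l) n)"
  using indep unfolding prob_space.indep_vars_def2[OF PM] by auto

definition Nm :: "nat \<Rightarrow> (nat \<times> nat \<Rightarrow> complex) measure" where
  "Nm l = (if l < m then distr M (cmat_space (p l) n) (B l)
           else return (cmat_space (p l) n) (restrict (\<lambda>_. 0) ({..<p l} \<times> {..<n})))"

lemma Nm_prob: "prob_space (Nm l)"
proof (cases "l < m")
  case True
  then show ?thesis unfolding Nm_def using prob_space.prob_space_distr[OF PM rvB[OF True]] by simp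
next
  case False
  have "restrict (\<lambda>_. 0) ({..<p l} \<times> {..<n}) \<in> space (cmat_space (p l) n)"
    by (simp add: cmat_space_def space_PiM)
  then show ?thesis unfolding Nm_def using False by (simp add: prob_space_return)
qed

lemma sets_Nm: "sets (Nm l) = sets (cmat_space (p l) n)"
  by (simp add: Nm_def)

definition mu :: "nat \<Rightarrow> nat \<Rightarrow> complex" where
  "mu l s = (CLINT \<omega>|M. gram (p l) (B l \<omega>) s i)"

definition Wf :: "nat \<Rightarrow> (nat \<times> nat \<Rightarrow> complex) \<Rightarrow> nat \<Rightarrow> complex" where
  "Wf l y s = (if s \<in> S then gram (p l) y s i - mu l s else 0)"

lemma Wf_meas_C: "(\<lambda>y. Wf l y s) \<in> borel_measurable (cmat_space (p l) n)"
proof (cases "s \<in> S")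
  case True
  then have "s < n" using Ssub by auto
  then show ?thesis unfolding Wf_def using True gram_meas[OF _ iL, of s "p l"] by simp
qed (simp add: Wf_def)

lemma Wf_meas: "(\<lambda>y. Wf l y s) \<in> borel_measurable (Nm l)"
  using Wf_meas_C measurable_cong_sets[OF sets_Nm refl] by blast

lemma Wf_comp_int: "l < m \<Longrightarrow> s \<in> S \<Longrightarrow> integrable M (\<lambda>\<omega>. Wf l (B l \<omega>) s)"
proof -
  assume l: "l < m" and s: "s \<in> S"
  interpret prob_space M by (rule PM)
  have "s < n" using s Ssub by auto
  then have "integrable M (\<lambda>\<omega>. gram (p l) (B l \<omega>) s i - mu l s)" using integr iL l
    by (intro Bochner_Integration.integrable_diff) auto
  then show ?thesis using s unfolding Wf_def by simp
qed

lemma Wf_int: "l < m \<Longrightarrow> s \<in> S \<Longrightarrow> integrable (Nm l) (\<lambda>y. Wf l y s)"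
  using Wf_comp_int integrable_distr_eq[OF rvB Wf_meas_C] by (simp add: Nm_def)

lemma Wf_mean: "l < m \<Longrightarrow> s \<in> S \<Longrightarrow> integral\<^sup>L (Nm l) (\<lambda>y. Wf l y s) = 0"
proof -
  assume l: "l < m" and s: "s \<in> S"
  have "integral\<^sup>L (Nm l) (\<lambda>y. Wf l y s) = integral\<^sup>L M (\<lambda>\<omega>. Wf l (B l \<omega>) s)"
    using l integral_distr[OF rvB[OF l] Wf_meas_C] by (simp add: Nm_def)
  also have "\<dots> = integral\<^sup>L M (\<lambda>\<omega>. gram (p l) (B l \<omega>) s i - mu l s)"
    using s by (simp add: Wf_def)
  also have "\<dots> = mu l s - mu l s"
  proof -
    have "s < n" using s Ssub by auto
    then have "integrable M (\<lambda>\<omega>. gram (p l) (B l \<omega>) s i)" using integr l iL by auto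
    interpret prob_space M by (rule PM)
    from \<open>integrable M (\<lambda>\<omega>. gram (p l) (B l \<omega>) s i)\<close> show ?thesis
      by (subst Bochner_Integration.integral_diff) (auto simp: mu_def prob_space)
  qed
  finally show ?thesis by simp
qed

lemma vnorm2_measurable':
  assumes "\<And>s. s \<in> S \<Longrightarrow> (\<lambda>y. W y s) \<in> borel_measurable N"
  shows "(\<lambda>y. vnorm2 S (W y)) \<in> borel_measurable N"
proof -
  have "(\<lambda>y. \<Sum>s\<in>S. (cmod (W y s))\<^sup>2) \<in> borel_measurable N"
  proof (rule borel_measurable_sum)
    fix s assume "s \<in> S"
    from assms[OF this] show "(\<lambda>y. (cmod (W y s))\<^sup>2) \<in> borel_measurable N" by measurable
  qed
  then show ?thesis unfolding vnorm2_def by measurable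
qed

lemma Ycomp_meas: "l < m \<Longrightarrow> s < n \<Longrightarrow> (\<lambda>\<omega>. gram (p l) (B l \<omega>) s i) \<in> borel_measurable M"
  using measurable_compose[OF rvB gram_meas[OF _ iL]] by blast

lemma vnY_meas: "l < m \<Longrightarrow> (\<lambda>\<omega>. vnorm2 S (\<lambda>s. gram (p l) (B l \<omega>) s i)) \<in> borel_measurable M"
  by (rule vnorm2_measurable') (use Ssub Ycomp_meas in auto)

lemma Y_bound: "l < m \<Longrightarrow> AE \<omega> in M. (\<Sum>s\<in>S. cmod (gram (p l) (B l \<omega>) s i)) \<le> \<Theta>"
  using Theta
proof (rule AE_mp, intro AE_I2 impI)
  fix \<omega> assume l: "l < m" and h: "\<forall>l<m. norm_inf_inf {..<n} S (gram (p l) (B l \<omega>)) \<le> \<Theta>"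
  have "(\<Sum>j\<in>S. cmod (gram (p l) (B l \<omega>) i j)) \<le> \<Theta>"
    using row_bound[OF finS iL] h l by blast
  moreover have "(\<Sum>s\<in>S. cmod (gram (p l) (B l \<omega>) s i)) = (\<Sum>j\<in>S. cmod (gram (p l) (B l \<omega>) i j))"
    by (rule sum.cong[OF refl]) (subst gram_cnj, simp)
  ultimately show "(\<Sum>s\<in>S. cmod (gram (p l) (B l \<omega>) s i)) \<le> \<Theta>" by simp
qed

lemma vnY_bound: "l < m \<Longrightarrow> AE \<omega> in M. vnorm2 S (\<lambda>s. gram (p l) (B l \<omega>) s i) \<le> \<Theta>"
  using Y_bound by (rule AE_mp) (auto intro!: AE_I2 intro: order_trans[OF vnorm2_le_l1])

lemma mu_bound: "l < m \<Longrightarrow> vnorm2 S (mu l) \<le> \<Theta>"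
proof -
  assume l: "l < m"
  interpret prob_space M by (rule PM)
  have int: "integrable M (\<lambda>\<omega>. gram (p l) (B l \<omega>) s i)" if "s \<in> S" for s
    using integr l iL that Ssub by auto
  have "vnorm2 S (mu l) \<le> (\<Sum>s\<in>S. cmod (mu l s))" by (rule vnorm2_le_l1)
  also have "\<dots> \<le> (\<Sum>s\<in>S. \<integral>\<omega>. cmod (gram (p l) (B l \<omega>) s i) \<partial>M)"
    unfolding mu_def by (intro sum_mono integral_norm_bound)
  also have "\<dots> = (\<integral>\<omega>. (\<Sum>s\<in>S. cmod (gram (p l) (B l \<omega>) s i)) \<partial>M)"
    by (rule Bochner_Integration.integral_sum[symmetric]) (use int in auto)
  also have "\<dots> \<le> (\<integral>\<omega>. \<Theta> \<partial>M)"
    by (rule integral_mono_AE) (use int Y_bound[OF l] in auto)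
  also have "\<dots> = \<Theta>" by (simp add: prob_space)
  finally show ?thesis .
qed

lemma Wf_bnd_M: assumes l: "l < m" shows "AE \<omega> in M. vnorm2 S (Wf l (B l \<omega>)) \<le> 2 * \<Theta>"
  using vnY_bound[OF l]
proof (rule AE_mp, intro AE_I2 impI)
  fix \<omega> assume h: "vnorm2 S (\<lambda>s. gram (p l) (B l \<omega>) s i) \<le> \<Theta>"
  have "vnorm2 S (Wf l (B l \<omega>)) = vnorm2 S (\<lambda>s. gram (p l) (B l \<omega>) s i + (- mu l s))"
    by (rule vnorm2_cong) (simp add: Wf_def)
  also have "\<dots> \<le> vnorm2 S (\<lambda>s. gram (p l) (B l \<omega>) s i) + vnorm2 S (\<lambda>s. - mu l s)"
    by (rule vnorm2_triangle)
  also have "\<dots> \<le> 2 * \<Theta>" using h mu_bound[OF l] by (simp add: vnorm2_uminus)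
  finally show "vnorm2 S (Wf l (B l \<omega>)) \<le> 2 * \<Theta>" .
qed

lemma Wf_bnd: "l < m \<Longrightarrow> AE y in Nm l. vnorm2 S (Wf l y) \<le> 2 * \<Theta>"
proof -
  assume l: "l < m"
  have [measurable]: "(\<lambda>y. vnorm2 S (Wf l y)) \<in> borel_measurable (cmat_space (p l) n)"
    by (rule vnorm2_measurable) (rule Wf_meas_C)
  have st: "{y \<in> space (cmat_space (p l) n). vnorm2 S (Wf l y) \<le> 2 * \<Theta>} \<in> sets (cmat_space (p l) n)"
    by measurable
  show ?thesis unfolding Nm_def using l Wf_bnd_M[OF l] AE_distr_iff[OF rvB[OF l] st] by simp
qed

lemma Wf_var_l:
  assumes l: "l < m" and L0: "0 \<le> \<Lambda>"
    and LA: "AE \<omega> in M. \<forall>l<m. norm_2_2 S S (gram (p l) (B l \<omega>)) \<le> \<Lambda>"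
  shows "(\<integral>y. (vnorm2 S (Wf l y))\<^sup>2 \<partial>Nm l) \<le> \<Lambda> * Re (CLINT \<omega>|M. gram (p l) (B l \<omega>) i i)"
proof -
  interpret prob_space M by (rule PM)
  define Y where "Y = (\<lambda>\<omega> s. gram (p l) (B l \<omega>) s i)"
  define g where "g = (\<lambda>\<omega>. \<Sum>k<p l. (cmod (B l \<omega> (k,i)))\<^sup>2)"
  define c where "c = (\<lambda>\<omega>. \<Sum>s\<in>S. Re (cnj (Y \<omega> s) * mu l s))"
  have intY: "integrable M (\<lambda>\<omega>. Y \<omega> s)" if "s \<in> S" for s
    using integr l iL that Ssub by (auto simp: Y_def)
  have measW[measurable]: "(\<lambda>y. vnorm2 S (Wf l y)) \<in> borel_measurable (cmat_space (p l) n)"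
    by (rule vnorm2_measurable) (rule Wf_meas_C)
  have "(\<integral>y. (vnorm2 S (Wf l y))\<^sup>2 \<partial>Nm l) = (\<integral>\<omega>. (vnorm2 S (Wf l (B l \<omega>)))\<^sup>2 \<partial>M)"
    unfolding Nm_def using l by (simp add: integral_distr[OF rvB[OF l]])
  also have "\<dots> = (\<integral>\<omega>. (vnorm2 S (Y \<omega>))\<^sup>2 - 2 * c \<omega> + (vnorm2 S (mu l))\<^sup>2 \<partial>M)"
  proof (rule Bochner_Integration.integral_cong[OF refl])
    fix \<omega>
    have "vnorm2 S (Wf l (B l \<omega>)) = vnorm2 S (\<lambda>s. Y \<omega> s + (- mu l s))"
      by (rule vnorm2_cong) (simp add: Wf_def Y_def)
    moreover have "ipS S (Y \<omega>) (\<lambda>s. - mu l s) = - c \<omega>"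
      unfolding ipS_def c_def by (subst sum_negf[symmetric]) (rule sum.cong; simp)
    ultimately show "(vnorm2 S (Wf l (B l \<omega>)))\<^sup>2 = (vnorm2 S (Y \<omega>))\<^sup>2 - 2 * c \<omega> + (vnorm2 S (mu l))\<^sup>2"
      using vnorm2_add_sq[of S "Y \<omega>" "\<lambda>s. - mu l s"] vnorm2_uminus[of S "mu l"] by simp
  qed
  also have "\<dots> = (\<integral>\<omega>. (vnorm2 S (Y \<omega>))\<^sup>2 \<partial>M) - 2 * (\<integral>\<omega>. c \<omega> \<partial>M) + (vnorm2 S (mu l))\<^sup>2"
  proof -
    have i1: "integrable M (\<lambda>\<omega>. (vnorm2 S (Y \<omega>))\<^sup>2)"
    proof (rule integrable_const_bound[where B="\<Theta>\<^sup>2"])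
      show "AE \<omega> in M. norm ((vnorm2 S (Y \<omega>))\<^sup>2) \<le> \<Theta>\<^sup>2"
        using vnY_bound[OF l] by eventually_elim (simp add: Y_def vnorm2_nonneg power_mono)
      show "(\<lambda>\<omega>. (vnorm2 S (Y \<omega>))\<^sup>2) \<in> borel_measurable M"
        using vnY_meas[OF l] unfolding Y_def by measurable
    qed
    have i2: "integrable M c"
      unfolding c_def using intY by (intro Bochner_Integration.integrable_sum integrable_Re integrable_mult_left integrable_cnj) auto
    show ?thesis using i1 i2
      by (subst Bochner_Integration.integral_add, (auto intro!: Bochner_Integration.integrable_diff)[2],
          subst Bochner_Integration.integral_diff) (auto simp: prob_space)
  qed
  also have "(\<integral>\<omega>. c \<omega> \<partial>M) = (vnorm2 S (mu l))\<^sup>2"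
  proof -
    have "(\<integral>\<omega>. c \<omega> \<partial>M) = (\<Sum>s\<in>S. \<integral>\<omega>. Re (cnj (Y \<omega> s) * mu l s) \<partial>M)"
      unfolding c_def using intY by (intro Bochner_Integration.integral_sum integrable_Re integrable_mult_left integrable_cnj) auto
    also have "\<dots> = (\<Sum>s\<in>S. Re (cnj (mu l s) * mu l s))"
    proof (rule sum.cong[OF refl])
      fix s assume s: "s \<in> S"
      have "(\<integral>\<omega>. Re (cnj (Y \<omega> s) * mu l s) \<partial>M) = Re (\<integral>\<omega>. cnj (Y \<omega> s) * mu l s \<partial>M)"
        using intY[OF s] by (intro integral_Re integrable_mult_left integrable_cnj)
      also have "\<dots> = Re (cnj (mu l s) * mu l s)"
        by (simp add: mu_def Y_def)
      finally show "(\<integral>\<omega>. Re (cnj (Y \<omega> s) * mu l s) \<partial>M) = Re (cnj (mu l s) * mu l s)" .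
    qed
    also have "\<dots> = (vnorm2 S (mu l))\<^sup>2"
      by (simp add: vnorm2_sq cnj_mult_self)
    finally show ?thesis .
  qed
  finally have "(\<integral>y. (vnorm2 S (Wf l y))\<^sup>2 \<partial>Nm l) \<le> (\<integral>\<omega>. (vnorm2 S (Y \<omega>))\<^sup>2 \<partial>M)"
    by simp
  also have "\<dots> \<le> (\<integral>\<omega>. \<Lambda> * g \<omega> \<partial>M)"
  proof (rule integral_mono_AE')
    have ig: "integrable M g"
    proof -
      have "integrable M (\<lambda>\<omega>. Re (gram (p l) (B l \<omega>) i i))" using integr l iL by auto
      then show ?thesis by (simp add: g_def gram_diag)
    qed
    then show "integrable M (\<lambda>\<omega>. \<Lambda> * g \<omega>)" by simp
    show "AE \<omega> in M. (vnorm2 S (Y \<omega>))\<^sup>2 \<le> \<Lambda> * g \<omega>"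
      using LA by eventually_elim (use l gram_var_bound[OF finS _ L0] in \<open>auto simp: Y_def g_def\<close>)
    show "AE \<omega> in M. 0 \<le> \<Lambda> * g \<omega>"
      using L0 by (intro AE_I2) (auto simp: g_def intro!: sum_nonneg mult_nonneg_nonneg)
  qed
  also have "\<dots> = \<Lambda> * Re (CLINT \<omega>|M. gram (p l) (B l \<omega>) i i)"
  proof -
    have e: "(\<lambda>\<omega>. gram (p l) (B l \<omega>) i i) = (\<lambda>\<omega>. complex_of_real (g \<omega>))"
      by (rule ext) (simp only: gram_diag g_def)
    have "(CLINT \<omega>|M. gram (p l) (B l \<omega>) i i) = complex_of_real (\<integral>\<omega>. g \<omega> \<partial>M)"
      by (simp only: e integral_complex_of_real)
    then show ?thesis by simp
  qed
  finally show ?thesis .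
qed

lemma Wf_var: "(\<Sum>l<m. \<integral>y. (vnorm2 S (Wf l y))\<^sup>2 \<partial>Nm l) \<le> real m * \<Theta>"
proof -
  obtain \<Lambda> where L: "\<Lambda> > 0" "AE \<omega> in M. \<forall>l<m. norm_2_2 S S (gram (p l) (B l \<omega>)) \<le> \<Lambda>" "\<Theta> \<ge> \<Lambda>"
    using Lambda by blast
  have "(\<Sum>l<m. \<integral>y. (vnorm2 S (Wf l y))\<^sup>2 \<partial>Nm l) \<le> (\<Sum>l<m. \<Lambda> * Re (CLINT \<omega>|M. gram (p l) (B l \<omega>) i i))"
    by (intro sum_mono Wf_var_l) (use L in auto)
  also have "\<dots> = \<Lambda> * Re (\<Sum>l<m. CLINT \<omega>|M. gram (p l) (B l \<omega>) i i)"
    by (simp add: sum_distrib_left Re_sum)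
  also have "(\<Sum>l<m. CLINT \<omega>|M. gram (p l) (B l \<omega>) i i) = of_nat m"
  proof -
    have "(1 / of_nat m) * (\<Sum>l<m. CLINT \<omega>|M. gram (p l) (B l \<omega>) i i) = 1"
      using isotropy iL by auto
    then show ?thesis using m1 by (simp add: field_simps)
  qed
  also have "\<Lambda> * Re (of_nat m) = real m * \<Lambda>" by simp
  also have "\<dots> \<le> real m * \<Theta>" using L by (intro mult_left_mono) auto
  finally show ?thesis .
qed

lemma T_eq: "vnorm2 S (\<lambda>s. \<Sum>l<m. Wf l (B l \<omega>) s) = real m * vnorm2 S (ASAe m p (\<lambda>l. B l \<omega>) i)"
proof -
  have "(\<Sum>l<m. Wf l (B l \<omega>) s) = of_nat m * ASAe m p (\<lambda>l. B l \<omega>) i s" if s: "s \<in> S" for s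
  proof -
    have sn: "s < n" and si: "s \<noteq> i" using s Ssub iS by auto
    have "(1 / of_nat m) * (\<Sum>l<m. mu l s) = 0"
      using isotropy sn iL si by (simp add: mu_def)
    then have mu0: "(\<Sum>l<m. mu l s) = 0" using m1 by simp
    have "(\<Sum>l<m. Wf l (B l \<omega>) s) = (\<Sum>l<m. gram (p l) (B l \<omega>) s i) - (\<Sum>l<m. mu l s)"
      using s by (simp add: Wf_def sum_subtractf)
    also have "\<dots> = (\<Sum>l<m. gram (p l) (B l \<omega>) s i)" using mu0 by simp
    also have "\<dots> = of_nat m * ASAe m p (\<lambda>l. B l \<omega>) i s"
      using m1 by (simp add: ASAe_eq[OF m1])
    finally show ?thesis .
  qed
  then have "vnorm2 S (\<lambda>s. \<Sum>l<m. Wf l (B l \<omega>) s) = vnorm2 S (\<lambda>s. of_nat m * ASAe m p (\<lambda>l. B l \<omega>) i s)"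
    by (rule vnorm2_cong)
  also have "\<dots> = real m * vnorm2 S (ASAe m p (\<lambda>l. B l \<omega>) i)"
    by (simp only: vnorm2_scale norm_of_nat)
  finally show ?thesis .
qed

lemma PiM_eq: "distr M (PiM {..<m} (\<lambda>l. cmat_space (p l) n)) (\<lambda>\<omega>. \<lambda>l\<in>{..<m}. B l \<omega>) = PiM {..<m} Nm"
proof -
  have ne: "{..<m} \<noteq> {}" using m1 by (simp add: lessThan_empty_iff)
  have "distr M (PiM {..<m} (\<lambda>l. cmat_space (p l) n)) (\<lambda>\<omega>. \<lambda>l\<in>{..<m}. B l \<omega>)
        = PiM {..<m} (\<lambda>l. distr M (cmat_space (p l) n) (B l))"
    using prob_space.indep_vars_iff_distr_eq_PiM'[OF PM ne rvB] indep by auto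
  also have "\<dots> = PiM {..<m} Nm"
    by (rule PiM_cong) (auto simp: Nm_def)
  finally show ?thesis .
qed

lemma restrictB_meas: "(\<lambda>\<omega>. \<lambda>l\<in>{..<m}. B l \<omega>) \<in> measurable M (PiM {..<m} (\<lambda>l. cmat_space (p l) n))"
  by (rule measurable_restrict) (use rvB in auto)

lemma transfer:
  assumes g[measurable]: "g \<in> borel_measurable borel"
  shows "(\<integral>\<^sup>+ \<omega>. ennreal (g (vnorm2 S (\<lambda>s. \<Sum>l<m. Wf l (B l \<omega>) s))) \<partial>M)
       = (\<integral>\<^sup>+ x. ennreal (g (vnorm2 S (\<lambda>s. \<Sum>l<m. Wf l (x l) s))) \<partial>PiM {..<m} Nm)"
proof -
  have Fm: "(\<lambda>x. ennreal (g (vnorm2 S (\<lambda>s. \<Sum>l<m. Wf l (x l) s)))) \<in> borel_measurable (PiM {..<m} (\<lambda>l. cmat_space (p l) n))"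
  proof -
    have "(\<lambda>x. vnorm2 S (\<lambda>s. \<Sum>l<m. Wf l (x l) s)) \<in> borel_measurable (PiM {..<m} (\<lambda>l. cmat_space (p l) n))"
      by (rule vnorm2_measurable[where W="\<lambda>x s. \<Sum>l<m. Wf l (x l) s"]) (rule sumW_meas[OF Wf_meas_C], simp)
    then show ?thesis by measurable
  qed
  have "(\<integral>\<^sup>+ x. ennreal (g (vnorm2 S (\<lambda>s. \<Sum>l<m. Wf l (x l) s))) \<partial>PiM {..<m} Nm)
      = (\<integral>\<^sup>+ x. ennreal (g (vnorm2 S (\<lambda>s. \<Sum>l<m. Wf l (x l) s))) \<partial>distr M (PiM {..<m} (\<lambda>l. cmat_space (p l) n)) (\<lambda>\<omega>. \<lambda>l\<in>{..<m}. B l \<omega>))"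
    by (simp add: PiM_eq)
  also have "\<dots> = (\<integral>\<^sup>+ \<omega>. ennreal (g (vnorm2 S (\<lambda>s. \<Sum>l<m. Wf l ((\<lambda>l\<in>{..<m}. B l \<omega>) l) s))) \<partial>M)"
    by (rule nn_integral_distr[OF restrictB_meas]) (use Fm in simp)
  also have "\<dots> = (\<integral>\<^sup>+ \<omega>. ennreal (g (vnorm2 S (\<lambda>s. \<Sum>l<m. Wf l (B l \<omega>) s))) \<partial>M)"
  proof -
    have "\<And>\<omega>. (\<lambda>s. \<Sum>l<m. Wf l ((\<lambda>l\<in>{..<m}. B l \<omega>) l) s) = (\<lambda>s. \<Sum>l<m. Wf l (B l \<omega>) s)"
      by (intro ext sum.cong) auto
    then show ?thesis by simp
  qed
  finally show ?thesis by simp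
qed

lemma markov_h:
  fixes f :: "'a \<Rightarrow> real" and h :: "real \<Rightarrow> real"
  assumes fm: "f \<in> borel_measurable M" and hm: "h \<in> borel_measurable borel"
    and hpos: "0 < h R" and hnn: "\<And>x. 0 \<le> h x" and hmono: "\<And>x. R \<le> x \<Longrightarrow> h R \<le> h x"
    and K: "(\<integral>\<^sup>+ \<omega>. ennreal (h (f \<omega>)) \<partial>M) \<le> ennreal K" and K0: "0 \<le> K"
  shows "measure M {\<omega>\<in>space M. R \<le> f \<omega>} \<le> K / h R"
proof -
  interpret prob_space M by (rule PM)
  define u where "u = (\<lambda>\<omega>. ennreal (h (f \<omega>)))"
  define c where "c = ennreal (1 / h R)"
  have um[measurable]: "u \<in> borel_measurable M" unfolding u_def using fm hm by measurable
  have sub: "{\<omega>\<in>space M. R \<le> f \<omega>} \<subseteq> {\<omega>\<in>space M. 1 \<le> c * u \<omega>}"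
  proof safe
    fix \<omega> assume "\<omega> \<in> space M" "R \<le> f \<omega>"
    then have "h R \<le> h (f \<omega>)" by (intro hmono)
    then have "1 \<le> (1 / h R) * h (f \<omega>)" using hpos by (simp add: field_simps)
    then have "ennreal 1 \<le> ennreal ((1 / h R) * h (f \<omega>))" by (rule ennreal_leI)
    also have "\<dots> = c * u \<omega>" unfolding c_def u_def
      by (rule ennreal_mult) (use hpos hnn in auto)
    finally show "1 \<le> c * u \<omega>" by simp
  qed
  have "emeasure M {\<omega>\<in>space M. R \<le> f \<omega>} \<le> emeasure M {\<omega>\<in>space M. 1 \<le> c * u \<omega>}"
    by (rule emeasure_mono[OF sub]) measurable
  also have "\<dots> \<le> c * (\<integral>\<^sup>+ x\<in>space M. u x \<partial>M)"
    by (rule nn_integral_Markov_inequality) auto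
  also have "(\<integral>\<^sup>+ x\<in>space M. u x \<partial>M) = (\<integral>\<^sup>+ x. u x \<partial>M)"
    by (rule nn_integral_cong) simp
  also have "c * (\<integral>\<^sup>+ x. u x \<partial>M) \<le> c * ennreal K"
    using K by (intro mult_left_mono) (auto simp: u_def)
  also have "\<dots> = ennreal (K / h R)" using hpos K0 by (simp add: c_def ennreal_mult[symmetric])
  finally have "ennreal (measure M {\<omega>\<in>space M. R \<le> f \<omega>}) \<le> ennreal (K / h R)"
    by (simp add: emeasure_eq_measure)
  then show ?thesis using hpos K0 by (simp add: ennreal_le_iff)
qed

lemma per_i:
  shows "measure M {\<omega> \<in> space M. sqrt (\<Theta> / real m) + t \<le> vnorm2 S (ASAe m p (\<lambda>l. B l \<omega>) i)}
           \<le> exp (- ((real m * t\<^sup>2 / 2) / (\<Theta> * (1 + 4 * sqrt (\<Theta> / real m) + 2 * t / 3))))"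
    and "{\<omega> \<in> space M. sqrt (\<Theta> / real m) + t \<le> vnorm2 S (ASAe m p (\<lambda>l. B l \<omega>) i)} \<in> sets M"
proof -
  interpret prob_space M by (rule PM)
  define a where "a = sqrt (\<Theta> / real m)"
  define D where "D = \<Theta> * (1 + 4 * a + 2 * t / 3)"
  define lam where "lam = t / D"
  define R where "R = real m * (a + t)"
  define V where "V = real m * \<Theta>"
  define f where "f = (\<lambda>\<omega>. vnorm2 S (\<lambda>s. \<Sum>l<m. Wf l (B l \<omega>) s))"
  have mpos: "0 < real m" using m1 by simp
  have a0: "0 < a" using Th mpos by (simp add: a_def)
  have D0: "0 < D" using Th a0 tpos by (simp add: D_def)
  have lam0: "0 \<le> lam" using tpos D0 by (simp add: lam_def)
  have lamb: "lam * (2 * \<Theta>) < 3"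
  proof -
    have pp: "0 < \<Theta> * 3 + \<Theta> * (a * 12)" using Th a0 by (intro add_pos_pos) auto
    have "t * (2 * \<Theta>) < 3 * D" using Th a0 tpos pp by (simp add: D_def algebra_simps)
    then show ?thesis using D0 by (simp add: lam_def field_simps)
  qed
  have R0: "0 < R" using mpos a0 tpos by (simp add: R_def)
  have fm[measurable]: "f \<in> borel_measurable M"
    unfolding f_def
  proof (rule vnorm2_measurable[where W="\<lambda>\<omega> s. \<Sum>l<m. Wf l (B l \<omega>) s"], rule borel_measurable_sum)
    fix s l assume "l \<in> {..<m}"
    then show "(\<lambda>\<omega>. Wf l (B l \<omega>) s) \<in> borel_measurable M"
      using measurable_compose[OF rvB Wf_meas_C] by auto
  qed
  have Eeq: "{\<omega> \<in> space M. sqrt (\<Theta> / real m) + t \<le> vnorm2 S (ASAe m p (\<lambda>l. B l \<omega>) i)}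
           = {\<omega> \<in> space M. R \<le> f \<omega>}"
    using mpos by (auto simp: f_def T_eq R_def a_def)
  show "{\<omega> \<in> space M. sqrt (\<Theta> / real m) + t \<le> vnorm2 S (ASAe m p (\<lambda>l. B l \<omega>) i)} \<in> sets M"
    unfolding Eeq by measurable
  note vb = vec_bernstein_prod[OF Nm_prob finS Wf_meas Wf_int Wf_mean Wf_bnd _ Wf_var lam0 lamb]
  have cb: "(\<integral>\<^sup>+ \<omega>. ennreal (cosh (lam * f \<omega>)) \<partial>M) \<le> ennreal (exp (lam\<^sup>2 * V / (2*(1 - lam*(2*\<Theta>)/3))))"
    using vb(1) Th transfer[of "\<lambda>x. cosh (lam * x)"] by (simp add: f_def V_def)
  have sb: "(\<integral>\<^sup>+ \<omega>. ennreal ((f \<omega>)\<^sup>2) \<partial>M) \<le> ennreal V"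
    using vb(2) Th transfer[of "\<lambda>x. x\<^sup>2"] by (simp add: f_def V_def)
  define P where "P = measure M {\<omega> \<in> space M. R \<le> f \<omega>}"
  have P0: "0 \<le> P" by (simp add: P_def)
  have cheb: "P \<le> V / R\<^sup>2"
    unfolding P_def
    by (rule markov_h[OF fm _ _ _ _ sb]) (use R0 Th mpos in \<open>auto simp: V_def intro: power_mono\<close>)
  have P1: "P \<le> exp (lam\<^sup>2 * V / (2*(1 - lam*(2*\<Theta>)/3))) / cosh (lam * R)"
    unfolding P_def
  proof (rule markov_h[OF fm _ _ _ _ cb])
    show "(\<lambda>x. cosh (lam * x)) \<in> borel_measurable borel" by measurable
    fix x assume "R \<le> x"
    then show "cosh (lam * R) \<le> cosh (lam * x)"
      using R0 lam0 by (simp add: cosh_real_nonneg_le_iff mult_left_mono)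
  qed auto
  have expb: "P \<le> 2 * exp (lam\<^sup>2 * V / (2*(1 - lam*(2*\<Theta>)/3)) - lam * R)"
  proof -
    have "exp (lam * R) \<le> 2 * cosh (lam * R)"
      by (simp add: cosh_def)
    then have "exp (lam\<^sup>2 * V / (2*(1 - lam*(2*\<Theta>)/3))) / cosh (lam * R)
             \<le> 2 * exp (lam\<^sup>2 * V / (2*(1 - lam*(2*\<Theta>)/3))) / exp (lam * R)"
      by (simp add: field_simps)
    also have "\<dots> = 2 * exp (lam\<^sup>2 * V / (2*(1 - lam*(2*\<Theta>)/3)) - lam * R)"
      by (simp add: exp_diff)
    finally show ?thesis using P1 by linarith
  qed
  have "P \<le> exp (- ((real m * t\<^sup>2 / 2) / D))"
    using final_real[of \<Theta> "real m" t P, OF Th mpos tpos P0] cheb expb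
    unfolding V_def R_def lam_def D_def a_def by simp
  then show "measure M {\<omega> \<in> space M. sqrt (\<Theta> / real m) + t \<le> vnorm2 S (ASAe m p (\<lambda>l. B l \<omega>) i)}
           \<le> exp (- ((real m * t\<^sup>2 / 2) / (\<Theta> * (1 + 4 * sqrt (\<Theta> / real m) + 2 * t / 3))))"
    unfolding Eeq P_def D_def a_def .
qed

end


theorem mainTheorem18:
  fixes M :: "'a measure"
    and n m :: nat
    and p :: "nat \<Rightarrow> nat"
    and B :: "nat \<Rightarrow> 'a \<Rightarrow> (nat \<times> nat \<Rightarrow> complex)"
    and S :: "nat set"
    and \<Theta> t :: real
  assumes "prob_space M"
    and "n \<ge> 1" and "m \<ge> 1"
    and "\<forall>l<m. p l \<ge> 1"
    and indep: "prob_space.indep_vars M (\<lambda>l. cmat_space (p l) n) B {..<m}"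
    and integr: "\<forall>l<m. \<forall>j<n. \<forall>j'<n.
                   integrable M (\<lambda>\<omega>. gram (p l) (B l \<omega>) j j')"
    and isotropy: "\<forall>j<n. \<forall>j'<n.
          (1 / of_nat m) * (\<Sum>l<m. integral\<^sup>L M (\<lambda>\<omega>. gram (p l) (B l \<omega>) j j'))
            = (if j = j' then 1 else 0)"
    and "S \<subseteq> {..<n}"
    and "\<Theta> > 0"
    and Theta: "AE \<omega> in M. \<forall>l<m. norm_inf_inf {..<n} S (gram (p l) (B l \<omega>)) \<le> \<Theta>"
    and Lambda: "\<exists>\<Lambda>::real. \<Lambda> > 0 \<and>
          (AE \<omega> in M. \<forall>l<m. norm_2_2 S S (gram (p l) (B l \<omega>)) \<le> \<Lambda>) \<and> \<Theta> \<ge> \<Lambda>"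
    and "t > 0"
  shows "measure M {\<omega> \<in> space M. \<exists>i\<in>{..<n} - S.
            vnorm2 S (ASAe m p (\<lambda>l. B l \<omega>) i) \<ge> sqrt (\<Theta> / m) + t}
         \<le> n * exp (- ((m * t\<^sup>2 / 2) / (\<Theta> * (1 + 4 * sqrt (\<Theta> / m) + 2 * t / 3))))"
  proof -
  interpret prob_space M by fact
  define Ei where "Ei = (\<lambda>i. {\<omega> \<in> space M. sqrt (\<Theta> / real m) + t \<le> vnorm2 S (ASAe m p (\<lambda>l. B l \<omega>) i)})"
  define bd where "bd = exp (- ((m * t\<^sup>2 / 2) / (\<Theta> * (1 + 4 * sqrt (\<Theta> / m) + 2 * t / 3))))"
  have Ei: "Ei i \<in> sets M" "measure M (Ei i) \<le> bd" if "i \<in> {..<n} - S" for i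
    using per_i[of M m p n B S \<Theta> t i] assms that unfolding Ei_def bd_def by auto
  have eq: "{\<omega> \<in> space M. \<exists>i\<in>{..<n} - S. vnorm2 S (ASAe m p (\<lambda>l. B l \<omega>) i) \<ge> sqrt (\<Theta> / m) + t}
            = (\<Union>i\<in>{..<n} - S. Ei i)"
    unfolding Ei_def by auto
  have "measure M (\<Union>i\<in>{..<n} - S. Ei i) \<le> (\<Sum>i\<in>{..<n} - S. measure M (Ei i))"
    by (rule finite_measure_subadditive_finite) (use Ei in auto)
  also have "\<dots> \<le> (\<Sum>i\<in>{..<n} - S. bd)"
    by (rule sum_mono) (use Ei in auto)
  also have "\<dots> = real (card ({..<n} - S)) * bd" by simp
  also have "\<dots> \<le> real n * bd"
  proof (rule mult_right_mono)
    have "card ({..<n} - S) \<le> card {..<n}" by (rule card_mono) auto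
    then show "real (card ({..<n} - S)) \<le> real n" by simp
  qed (simp add: bd_def)
  finally show ?thesis unfolding eq bd_def .
qed

end
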